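(* There exist positive reals $\gamma_k(\eta,\vartheta,d,n)$, defined for all positive integers $d,n$ with $n\geqslant 4d$, all $0<\eta,\vartheta\leqslant1$ and all $k\in\{1,\dots,\ell\}$ where $\ell\coloneqq\binom{\lfloor n/2\rfloor}{d}$, such that $\gamma_k(\eta,\vartheta,d,n)$ tends to zero as $n$ tends to infinity and $\eta,\vartheta$ tend to zero, and with the following property. Let $d,n$ be positive integers with $n\geqslant 4d$, let $0<\eta,\vartheta\leqslant1$, let $\boldsymbol{\gamma}=(\gamma_k(\eta,\vartheta,d,n))_{k=1}^{\ell}$, let $\mathcal{X}$ be a finite set, let $\mathcal{S}$ be a nonempty subset of $\mathcal{X}$, and let $\boldsymbol{X}$ be an $\mathcal{X}$-valued, $\eta$-spreadable, $d$-dimensional random array on $[n]$. If $\boldsymbol{X}$ is $(\vartheta,\mathcal{S})$-box independent, then $\boldsymbol{X}$ is $(\boldsymbol{\gamma},\mathcal{S})$-independent.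
   Context: $[n]=\{1,\dots,n\}$, $\binom{I}{d}$ is the set of $d$-element subsets of $I$. A $d$-dimensional random array on $[n]$ is a process $\boldsymbol{X}=\langle X_s:s\in\binom{[n]}{d}\rangle$; $\boldsymbol{X}_J=\langle X_s:s\in\binom{J}{d}\rangle$. $\boldsymbol{X}$ is $\eta$-spreadable if for all $J,K\subseteq[n]$ with $|J|=|K|\geqslant d$ the laws of $\boldsymbol{X}_J,\boldsymbol{X}_K$ (identified via the increasing bijection $J\to K$) are at total variation distance at most $\eta$. A $d$-dimensional box of $[n]$ is a set $\{s\in\binom{[n]}{d}:|s\cap H_i|=1\ \forall i\in[d]\}$ where $H_1,\dots,H_d$ are 2-element subsets of $[n]$ with $\max(H_i)<\min(H_{i+1})$. $\boldsymbol{X}$ is $(\vartheta,\mathcal{S})$-box independent if for every $d$-dimensional box $B$ of $[n]$ and every $a\in\mathcal{S}$, $\mathbb{P}(\bigcap_{s\in B}[X_s=a])\leqslant\prod_{s\in B}\mathbb{P}([X_s=a])+\vartheta$. For $\boldsymbol{\gamma}=(\gamma_k)_{k=1}^\ell$, $\boldsymbol{X}$ is $(\boldsymbol{\gamma},\mathcal{S})$-independent if for every nonempty $\mathcal{F}\subseteq\binom{[n]}{d}$ with $|\bigcup\mathcal{F}|\leqslant n/2$ and every family $(a_s)_{s\in\mathcal{F}}$ of elements of $\mathcal{S}$, $|\mathbb{P}(\bigcap_{s\in\mathcal{F}}[X_s=a_s])-\prod_{s\in\mathcal{F}}\mathbb{P}([X_s=a_s])|\leqslant\gamma_{|\mathcal{F}|}$.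 *)

theory Defs
  imports "HOL-Probability.Probability"
begin

text \<open>A d-dimensional random array on [n] with values in a set of naturals is represented
by its law: a pmf on functions (nat set \<Rightarrow> nat); only the values on d-subsets of {1..n}
are relevant.\<close>

definition dsets :: "nat set \<Rightarrow> nat \<Rightarrow> nat set set" where
  "dsets I d = {s. s \<subseteq> I \<and> card s = d}"

text \<open>Law of the subarray X_J, re-indexed on {0..<card J} via the increasing bijection.\<close>
definition subarray_law :: "nat \<Rightarrow> nat set \<Rightarrow> (nat set \<Rightarrow> 'x) pmf \<Rightarrow> (nat set \<Rightarrow> 'x) pmf" where
  "subarray_law d J p = map_pmf
     (\<lambda>f t. if t \<in> dsets {..<card J} d then f ((\<lambda>i. sorted_list_of_set J ! i) ` t) else undefined) p"

definition tv_dist :: "'a pmf \<Rightarrow> 'a pmf \<Rightarrow> real" where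
  "tv_dist p q = (SUP A. \<bar>measure_pmf.prob p A - measure_pmf.prob q A\<bar>)"

definition array_valued :: "nat \<Rightarrow> nat \<Rightarrow> (nat set \<Rightarrow> 'x) pmf \<Rightarrow> 'x set \<Rightarrow> bool" where
  "array_valued d n p \<X> \<longleftrightarrow> (\<forall>f\<in>set_pmf p. \<forall>s\<in>dsets {1..n} d. f s \<in> \<X>)"

definition spreadable :: "real \<Rightarrow> nat \<Rightarrow> nat \<Rightarrow> (nat set \<Rightarrow> 'x) pmf \<Rightarrow> bool" where
  "spreadable \<eta> d n p \<longleftrightarrow>
     (\<forall>J K. J \<subseteq> {1..n} \<longrightarrow> K \<subseteq> {1..n} \<longrightarrow> card J = card K \<longrightarrow> d \<le> card J \<longrightarrow>
        tv_dist (subarray_law d J p) (subarray_law d K p) \<le> \<eta>)"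

definition is_box :: "nat \<Rightarrow> nat \<Rightarrow> nat set set \<Rightarrow> bool" where
  "is_box d n B \<longleftrightarrow> (\<exists>H :: nat \<Rightarrow> nat set.
     (\<forall>i\<in>{1..d}. H i \<subseteq> {1..n} \<and> card (H i) = 2) \<and>
     (\<forall>i\<in>{1..<d}. Max (H i) < Min (H (Suc i))) \<and>
     B = {s \<in> dsets {1..n} d. \<forall>i\<in>{1..d}. card (s \<inter> H i) = 1})"

definition box_independent :: "real \<Rightarrow> 'x set \<Rightarrow> nat \<Rightarrow> nat \<Rightarrow> (nat set \<Rightarrow> 'x) pmf \<Rightarrow> bool" where
  "box_independent \<theta> S d n p \<longleftrightarrow>
     (\<forall>B. is_box d n B \<longrightarrow> (\<forall>a\<in>S.
        measure_pmf.prob p (\<Inter>s\<in>B. {f. f s = a})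
          \<le> (\<Prod>s\<in>B. measure_pmf.prob p {f. f s = a}) + \<theta>))"

definition gamma_independent :: "(nat \<Rightarrow> real) \<Rightarrow> 'x set \<Rightarrow> nat \<Rightarrow> nat \<Rightarrow> (nat set \<Rightarrow> 'x) pmf \<Rightarrow> bool" where
  "gamma_independent \<gamma> S d n p \<longleftrightarrow>
     (\<forall>F. F \<noteq> {} \<longrightarrow> F \<subseteq> dsets {1..n} d \<longrightarrow> real (card (\<Union>F)) \<le> real n / 2 \<longrightarrow>
       (\<forall>a :: nat set \<Rightarrow> 'x. (\<forall>s\<in>F. a s \<in> S) \<longrightarrow>
          \<bar>measure_pmf.prob p (\<Inter>s\<in>F. {f. f s = a s})
            - (\<Prod>s\<in>F. measure_pmf.prob p {f. f s = a s})\<bar> \<le> \<gamma> (card F)))"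

end

theory Submission
  imports Defs
begin



definition mix :: "nat \<Rightarrow> nat set \<Rightarrow> (nat \<Rightarrow> nat) \<Rightarrow> nat \<Rightarrow> nat" where
  "mix D T w = (\<lambda>j. if j \<in> T then w (j + D) else w j)"

definition indep :: "('o \<Rightarrow> (nat \<Rightarrow> nat) \<Rightarrow> real) \<Rightarrow> nat \<Rightarrow> bool" where
  "indep F j \<longleftrightarrow> (\<forall>\<omega> w x. F \<omega> (w(j := x)) = F \<omega> w)"

definition EE :: "'o set \<Rightarrow> ('o \<Rightarrow> real) \<Rightarrow> (nat \<Rightarrow> nat) set \<Rightarrow> ('o \<Rightarrow> (nat \<Rightarrow> nat) \<Rightarrow> real) \<Rightarrow> real" where
  "EE \<Omega> P G F = (\<Sum>\<omega>\<in>\<Omega>. P \<omega> * (\<Sum>w\<in>G. F \<omega> w)) / real (card G)"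

definition dbl :: "nat \<Rightarrow> nat set \<Rightarrow> ('o \<Rightarrow> (nat \<Rightarrow> nat) \<Rightarrow> real) \<Rightarrow> 'o \<Rightarrow> (nat \<Rightarrow> nat) \<Rightarrow> real" where
  "dbl D I Z = (\<lambda>\<omega> w. \<Prod>T\<in>Pow I. Z \<omega> (mix D T w))"

fun dlt :: "nat \<Rightarrow> real \<Rightarrow> real" where
  "dlt 0 x = x"
| "dlt (Suc m) x = sqrt (3 * dlt m (2 * (x + sqrt x)))"

lemma resample:
  fixes F :: "(nat \<Rightarrow> nat) \<Rightarrow> real"
  assumes "finite K" "j \<in> K" "\<forall>i\<in>K. finite (W i)"
  shows "(\<Sum>w\<in>PiE K W. F w) * real (card (W j)) = (\<Sum>w\<in>PiE K W. \<Sum>x\<in>W j. F (w(j:=x)))"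
proof -
  define K0 where "K0 = K - {j}"
  have K: "K = insert j K0" "j \<notin> K0" using assms(2) by (auto simp: K0_def)
  have gen: "(\<Sum>w\<in>PiE K W. H w) = (\<Sum>y\<in>W j. \<Sum>g\<in>PiE K0 W. H (g(j:=y)))" for H :: "(nat \<Rightarrow> nat) \<Rightarrow> real"
  proof -
    have "(\<Sum>w\<in>PiE K W. H w) = (\<Sum>w\<in>(\<lambda>(y, g). g(j := y)) ` (W j \<times> PiE K0 W). H w)"
      by (simp add: K PiE_insert_eq)
    also have "\<dots> = (\<Sum>yg\<in>W j \<times> PiE K0 W. H ((\<lambda>(y, g). g(j := y)) yg))"
      by (rule sum.reindex[unfolded comp_def], rule inj_combinator, rule K(2))
    also have "\<dots> = (\<Sum>y\<in>W j. \<Sum>g\<in>PiE K0 W. H (g(j:=y)))"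
      by (simp add: sum.cartesian_product split_def)
    finally show ?thesis .
  qed
  have "(\<Sum>w\<in>PiE K W. \<Sum>x\<in>W j. F (w(j:=x))) = (\<Sum>y\<in>W j. \<Sum>g\<in>PiE K0 W. \<Sum>x\<in>W j. F (g(j:=x)))"
    using gen[of "\<lambda>w. \<Sum>x\<in>W j. F (w(j:=x))"] by simp
  also have "\<dots> = real (card (W j)) * (\<Sum>g\<in>PiE K0 W. \<Sum>x\<in>W j. F (g(j:=x)))"
    by simp
  also have "(\<Sum>g\<in>PiE K0 W. \<Sum>x\<in>W j. F (g(j:=x))) = (\<Sum>w\<in>PiE K W. F w)"
    by (subst sum.swap) (simp add: gen[of F])
  finally show ?thesis by (metis mult.commute)
qed

lemma resample_avg:
  fixes F :: "(nat \<Rightarrow> nat) \<Rightarrow> real"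
  assumes "finite K" "j \<in> K" "\<forall>i\<in>K. finite (W i)" "W j \<noteq> {}"
  shows "(\<Sum>w\<in>PiE K W. F w) = (\<Sum>w\<in>PiE K W. (\<Sum>x\<in>W j. F (w(j:=x))) / real (card (W j)))"
proof -
  have c: "real (card (W j)) > 0" using assms by (simp add: card_gt_0_iff)
  have "(\<Sum>w\<in>PiE K W. F w) = (\<Sum>w\<in>PiE K W. F w) * real (card (W j)) / real (card (W j))"
    using c by simp
  also have "\<dots> = (\<Sum>w\<in>PiE K W. \<Sum>x\<in>W j. F (w(j:=x))) / real (card (W j))"
    using resample[OF assms(1-3)] by simp
  finally show ?thesis by (simp add: sum_divide_distrib)
qed

lemma wjensen:
  fixes x P :: "'a \<Rightarrow> real"
  assumes "finite A" "\<forall>a\<in>A. 0 \<le> P a" "sum P A \<le> 1"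
  shows "(\<Sum>a\<in>A. P a * x a)^2 \<le> (\<Sum>a\<in>A. P a * (x a)^2)"
proof -
  define m where "m = (\<Sum>a\<in>A. P a * x a)"
  have "0 \<le> (\<Sum>a\<in>A. P a * (x a - m)^2)" using assms by (intro sum_nonneg) auto
  also have "\<dots> = (\<Sum>a\<in>A. P a * (x a)^2 - 2 * m * (P a * x a) + m^2 * P a)"
    by (intro sum.cong) (auto simp: power2_eq_square algebra_simps)
  also have "\<dots> = (\<Sum>a\<in>A. P a * (x a)^2) - 2 * m * m + m^2 * sum P A"
    by (simp add: sum.distrib sum_subtractf sum_distrib_left m_def)
  also have "\<dots> \<le> (\<Sum>a\<in>A. P a * (x a)^2) - m^2"
  proof -
    have "m^2 * sum P A \<le> m^2" using assms(3) by (simp add: mult_left_le)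
    then show ?thesis by (simp add: power2_eq_square)
  qed
  finally show ?thesis by (simp add: m_def)
qed

lemma avg_jensen:
  fixes x :: "'a \<Rightarrow> real"
  assumes "finite G" "G \<noteq> {}"
  shows "((\<Sum>w\<in>G. x w) / real (card G))^2 \<le> (\<Sum>w\<in>G. (x w)^2) / real (card G)"
proof -
  have c: "real (card G) > 0" using assms by (simp add: card_gt_0_iff)
  have "(\<Sum>w\<in>G. (1 / real (card G)) * x w)^2 \<le> (\<Sum>w\<in>G. (1 / real (card G)) * (x w)^2)"
    by (rule wjensen) (use assms c in auto)
  then show ?thesis by (simp add: sum_divide_distrib[symmetric] sum_distrib_left[symmetric])
qed

locale EEsetup =
  fixes \<Omega> :: "'o set" and P :: "'o \<Rightarrow> real" and G :: "(nat \<Rightarrow> nat) set"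
  assumes finO: "finite \<Omega>" and Pnn: "\<forall>\<omega>\<in>\<Omega>. 0 \<le> P \<omega>" and Psum: "sum P \<Omega> = 1"
    and finG: "finite G" and neG: "G \<noteq> {}"
begin

abbreviation E where "E \<equiv> EE \<Omega> P G"

lemma cG: "real (card G) > 0" using finG neG by (simp add: card_gt_0_iff)

lemma EE_alt: "E F = (\<Sum>\<omega>\<in>\<Omega>. P \<omega> * ((\<Sum>w\<in>G. F \<omega> w) / real (card G)))"
  unfolding EE_def by (subst sum_divide_distrib) (simp only: times_divide_eq_right)

lemma EE_cong: "(\<And>\<omega> w. \<omega> \<in> \<Omega> \<Longrightarrow> w \<in> G \<Longrightarrow> F \<omega> w = H \<omega> w) \<Longrightarrow> E F = E H"
  unfolding EE_def by (intro arg_cong2[where f="(/)"] sum.cong refl arg_cong2[where f="(*)"]) auto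

lemma EE_mono: "(\<And>\<omega> w. \<omega> \<in> \<Omega> \<Longrightarrow> w \<in> G \<Longrightarrow> F \<omega> w \<le> H \<omega> w) \<Longrightarrow> E F \<le> E H"
  unfolding EE_def using cG Pnn
  by (intro divide_right_mono sum_mono mult_left_mono) auto

lemma EE_add: "E (\<lambda>\<omega> w. F \<omega> w + H \<omega> w) = E F + E H"
  unfolding EE_def by (simp add: sum.distrib distrib_left add_divide_distrib)

lemma EE_diff: "E (\<lambda>\<omega> w. F \<omega> w - H \<omega> w) = E F - E H"
  unfolding EE_def by (simp add: sum_subtractf right_diff_distrib diff_divide_distrib)

lemma EE_cmult: "E (\<lambda>\<omega> w. c * F \<omega> w) = c * E F"
  unfolding EE_def by (simp add: sum_distrib_left[symmetric] algebra_simps)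

lemma EE_const: "E (\<lambda>\<omega> w. c) = c"
  unfolding EE_def using cG Psum by (simp add: sum_distrib_right[symmetric])

lemma EE_jensen: "(E F)^2 \<le> E (\<lambda>\<omega> w. (F \<omega> w)^2)"
proof -
  have "(E F)^2 \<le> (\<Sum>\<omega>\<in>\<Omega>. P \<omega> * ((\<Sum>w\<in>G. F \<omega> w) / real (card G))^2)"
    unfolding EE_alt by (rule wjensen) (use finO Pnn Psum in auto)
  also have "\<dots> \<le> (\<Sum>\<omega>\<in>\<Omega>. P \<omega> * ((\<Sum>w\<in>G. (F \<omega> w)^2) / real (card G)))"
    using Pnn by (intro sum_mono mult_left_mono avg_jensen finG neG) auto
  finally show ?thesis unfolding EE_alt .
qed

end

lemma sq_identity:
  fixes y :: "(nat \<Rightarrow> nat) \<Rightarrow> real"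
  assumes finK: "finite K" and finW: "\<forall>i\<in>K. finite (W i) \<and> W i \<noteq> {}"
    and dK: "d \<in> K" "e \<in> K" and We: "W e = W d" and de: "d \<noteq> e"
    and yi: "\<And>w x. y (w(e:=x)) = y w"
  shows "(\<Sum>w\<in>PiE K W. y w * y (w(d := w e))) = (\<Sum>w\<in>PiE K W. ((\<Sum>x\<in>W d. y (w(d:=x))) / real (card (W d)))^2)"
proof -
  define g where "g w = (\<Sum>x\<in>W d. y (w(d:=x))) / real (card (W d))" for w
  have fW: "\<forall>i\<in>K. finite (W i)" using finW by auto
  have neW: "W d \<noteq> {}" "W e \<noteq> {}" using finW dK by auto
  have "(\<Sum>w\<in>PiE K W. y w * y (w(d := w e)))
      = (\<Sum>w\<in>PiE K W. (\<Sum>x\<in>W d. y (w(d:=x)) * y ((w(d:=x))(d := (w(d:=x)) e))) / real (card (W d)))"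
    by (rule resample_avg[OF finK dK(1) fW neW(1)])
  also have "\<dots> = (\<Sum>w\<in>PiE K W. g w * y (w(d := w e)))"
    using de by (intro sum.cong refl) (simp add: g_def sum_distrib_right)
  also have "\<dots> = (\<Sum>w\<in>PiE K W. (\<Sum>x\<in>W e. g (w(e:=x)) * y ((w(e:=x))(d := (w(e:=x)) e))) / real (card (W e)))"
    by (rule resample_avg[OF finK dK(2) fW neW(2)])
  also have "\<dots> = (\<Sum>w\<in>PiE K W. (g w)^2)"
  proof (intro sum.cong refl)
    fix w
    have g1: "g (w(e:=x)) = g w" for x
      unfolding g_def using de yi by (simp add: fun_upd_twist)
    have y1: "y ((w(e:=x))(d := x)) = y (w(d:=x))" for x
      using de yi by (simp add: fun_upd_twist)
    show "(\<Sum>x\<in>W e. g (w(e:=x)) * y ((w(e:=x))(d := (w(e:=x)) e))) / real (card (W e)) = (g w)^2"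
    proof -
      have "(\<Sum>x\<in>W e. g (w(e:=x)) * y ((w(e:=x))(d := (w(e:=x)) e))) = (\<Sum>x\<in>W d. g w * y (w(d:=x)))"
        using g1 y1 We by simp
      also have "\<dots> = g w * (\<Sum>x\<in>W d. y (w(d:=x)))"
        by (simp add: sum_distrib_left)
      also have "(\<Sum>x\<in>W d. y (w(d:=x))) = g w * real (card (W d))"
        using neW finW dK by (simp add: g_def)
      finally have X: "(\<Sum>x\<in>W e. g (w(e:=x)) * y ((w(e:=x))(d := (w(e:=x)) e))) = g w * (g w * real (card (W d)))" .
      have c0: "real (card (W d)) \<noteq> 0" using neW finW dK by auto
      show ?thesis unfolding X unfolding We using c0 by (simp add: power2_eq_square)
    qed
  qed
  finally show ?thesis by (simp add: g_def)
qed

locale grid =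
  fixes \<Omega> :: "'o set" and P :: "'o \<Rightarrow> real" and K :: "nat set" and W :: "nat \<Rightarrow> nat set" and D :: nat
  assumes finO': "finite \<Omega>" and Pnn': "\<forall>\<omega>\<in>\<Omega>. 0 \<le> P \<omega>" and Psum': "sum P \<Omega> = 1"
    and finK: "finite K" and finW: "\<forall>i\<in>K. finite (W i) \<and> W i \<noteq> {}" and Dpos: "0 < D"
begin

sublocale EEsetup \<Omega> P "PiE K W"
  by unfold_locales (use finO' Pnn' Psum' finK finW in \<open>auto simp: finite_PiE PiE_eq_empty_iff\<close>)

lemma mix1: "mix D {d} w = w(d := w (d + D))"
  unfolding mix_def by (rule ext) simp

lemma keyCS:
  assumes dK: "d \<in> K" "d + D \<in> K" and We: "W (d + D) = W d"
    and bi: "indep b d" and b01: "\<forall>\<omega> w. 0 \<le> b \<omega> w \<and> b \<omega> w \<le> 1" and Yi: "indep Y (d + D)"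
  shows "(E (\<lambda>\<omega> w. b \<omega> w * Y \<omega> w))^2 \<le> E (\<lambda>\<omega> w. Y \<omega> w * Y \<omega> (mix D {d} w))"
proof -
  define g where "g \<omega> w = (\<Sum>x\<in>W d. Y \<omega> (w(d:=x))) / real (card (W d))" for \<omega> w
  have fW: "\<forall>i\<in>K. finite (W i)" using finW by auto
  have neW: "W d \<noteq> {}" using finW dK by auto
  have 1: "(\<Sum>w\<in>PiE K W. b \<omega> w * Y \<omega> w) = (\<Sum>w\<in>PiE K W. b \<omega> w * g \<omega> w)" for \<omega>
  proof -
    have "(\<Sum>w\<in>PiE K W. b \<omega> w * Y \<omega> w) = (\<Sum>w\<in>PiE K W. (\<Sum>x\<in>W d. b \<omega> (w(d:=x)) * Y \<omega> (w(d:=x))) / real (card (W d)))"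
      by (rule resample_avg[OF finK dK(1) fW neW])
    also have "\<dots> = (\<Sum>w\<in>PiE K W. b \<omega> w * g \<omega> w)"
      using bi unfolding indep_def by (simp add: g_def sum_distrib_left)
    finally show "(\<Sum>w\<in>PiE K W. b \<omega> w * Y \<omega> w) = (\<Sum>w\<in>PiE K W. b \<omega> w * g \<omega> w)" .
  qed
  have "(E (\<lambda>\<omega> w. b \<omega> w * g \<omega> w))^2 \<le> E (\<lambda>\<omega> w. (b \<omega> w * g \<omega> w)^2)"
    by (rule EE_jensen)
  also have "\<dots> \<le> E (\<lambda>\<omega> w. (g \<omega> w)^2)"
  proof (rule EE_mono)
    fix \<omega> w
    have "(b \<omega> w)^2 \<le> 1" using b01 by (simp add: power_le_one)
    then have "(b \<omega> w)^2 * (g \<omega> w)^2 \<le> 1 * (g \<omega> w)^2" by (intro mult_right_mono) auto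
    then show "(b \<omega> w * g \<omega> w)^2 \<le> (g \<omega> w)^2" by (simp add: power_mult_distrib)
  qed
  also have "\<dots> = E (\<lambda>\<omega> w. Y \<omega> w * Y \<omega> (mix D {d} w))"
  proof -
    have "(\<Sum>w\<in>PiE K W. (g \<omega> w)^2) = (\<Sum>w\<in>PiE K W. Y \<omega> w * Y \<omega> (mix D {d} w))" for \<omega>
      unfolding mix1 g_def
      by (rule sq_identity[symmetric, OF finK finW dK We]) (use Dpos Yi in \<open>auto simp: indep_def\<close>)
    then show ?thesis unfolding EE_def by simp
  qed
  finally show ?thesis using 1 unfolding EE_def by simp
qed

end

lemma indep_mult: "indep F j \<Longrightarrow> indep H j \<Longrightarrow> indep (\<lambda>\<omega> w. F \<omega> w * H \<omega> w) j"
  by (simp add: indep_def)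

lemma indep_prod: "(\<And>i. i \<in> A \<Longrightarrow> indep (f i) j) \<Longrightarrow> indep (\<lambda>\<omega> w. \<Prod>i\<in>A. f i \<omega> w) j"
  by (simp add: indep_def)

lemma indep_diffc: "indep F j \<Longrightarrow> indep (\<lambda>\<omega> w. F \<omega> w - r) j"
  by (simp add: indep_def)

lemma indep_const: "indep (\<lambda>\<omega> w. c) j"
  by (simp add: indep_def)

lemma mix_upd: "k \<notin> T \<Longrightarrow> (\<forall>j\<in>T. j + D \<noteq> k) \<Longrightarrow> mix D T (w(k := x)) = (mix D T w)(k := x)"
  unfolding mix_def by (rule ext) auto

lemma indep_mix: "indep F k \<Longrightarrow> k \<notin> T \<Longrightarrow> (\<forall>j\<in>T. j + D \<noteq> k) \<Longrightarrow> indep (\<lambda>\<omega> w. F \<omega> (mix D T w)) k"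
  by (simp add: indep_def mix_upd)

lemma mix_empty: "mix D {} w = w"
  unfolding mix_def by simp

lemma mix_ins1: "d \<notin> T \<Longrightarrow> d + D \<notin> T \<Longrightarrow> (\<forall>j\<in>T. j + D \<noteq> d) \<Longrightarrow> mix D {d} (mix D T w) = mix D (insert d T) w"
  unfolding mix_def by (rule ext) auto

lemma mix_ins2: "d \<notin> T \<Longrightarrow> (\<forall>j\<in>T. j + D \<noteq> d) \<Longrightarrow> mix D T (mix D {d} w) = mix D (insert d T) w"
  unfolding mix_def by (rule ext) auto

lemma dbl_empty: "dbl D {} Z = Z"
  unfolding dbl_def by (simp add: mix_empty)

lemma dbl_split:
  assumes "finite I" "d \<notin> I"
  shows "dbl D (insert d I) Z \<omega> w = (\<Prod>T\<in>Pow I. Z \<omega> (mix D T w)) * (\<Prod>T\<in>Pow I. Z \<omega> (mix D (insert d T) w))"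
proof -
  have inj: "inj_on (insert d) (Pow I)" using assms(2) by (auto simp: inj_on_def)
  have disj: "Pow I \<inter> insert d ` Pow I = {}" using assms(2) by auto
  have "dbl D (insert d I) Z \<omega> w = (\<Prod>T\<in>Pow I \<union> insert d ` Pow I. Z \<omega> (mix D T w))"
    unfolding dbl_def Pow_insert ..
  also have "\<dots> = (\<Prod>T\<in>Pow I. Z \<omega> (mix D T w)) * (\<Prod>T\<in>insert d ` Pow I. Z \<omega> (mix D T w))"
    by (rule prod.union_disjoint) (use assms disj in auto)
  also have "(\<Prod>T\<in>insert d ` Pow I. Z \<omega> (mix D T w)) = (\<Prod>T\<in>Pow I. Z \<omega> (mix D (insert d T) w))"
    by (subst prod.reindex[OF inj]) simp
  finally show ?thesis .
qed

lemma dbl_ins1: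
  assumes "finite I" "d \<notin> I" "\<forall>j\<in>insert d I. j < D"
  shows "dbl D (insert d I) Z \<omega> w = dbl D I (\<lambda>\<omega> w. Z \<omega> w * Z \<omega> (mix D {d} w)) \<omega> w"
proof -
  have "\<forall>T\<in>Pow I. mix D {d} (mix D T w) = mix D (insert d T) w"
    using assms by (intro ballI mix_ins1) auto
  then show ?thesis unfolding dbl_split[OF assms(1,2)] unfolding dbl_def
    by (simp add: prod.distrib)
qed

lemma dbl_ins2:
  assumes "finite I" "d \<notin> I" "\<forall>j\<in>insert d I. j < D"
  shows "dbl D (insert d I) Z \<omega> w = dbl D I Z \<omega> w * dbl D I Z \<omega> (mix D {d} w)"
proof -
  have "\<forall>T\<in>Pow I. mix D T (mix D {d} w) = mix D (insert d T) w"
    using assms by (intro ballI mix_ins2) auto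
  then show ?thesis unfolding dbl_split[OF assms(1,2)] unfolding dbl_def
    by simp
qed

lemma indep_dbl:
  assumes "indep Z k" "\<forall>T\<in>Pow I. k \<notin> T \<and> (\<forall>j\<in>T. j + D \<noteq> k)"
  shows "indep (dbl D I Z) k"
  unfolding dbl_def
  by (rule indep_prod, rule indep_mix) (use assms in auto)

context grid begin

lemma EE_swap:
  assumes de: "d \<in> K" "e \<in> K" "W e = W d" "d \<noteq> e"
    and FH: "\<And>\<omega> w. F \<omega> (w(d := w e, e := w d)) = H \<omega> w"
  shows "E F = E H"
proof -
  let ?s = "\<lambda>w::nat\<Rightarrow>nat. w(d := w e, e := w d)"
  have ss: "?s (?s w) = w" for w using de(4) by (auto simp: fun_eq_iff)
  have sG: "?s w \<in> PiE K W" if "w \<in> PiE K W" for w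
    using that de by (auto simp: PiE_iff extensional_def)
  have "(\<Sum>w\<in>PiE K W. H \<omega> w) = (\<Sum>w\<in>PiE K W. F \<omega> w)" for \<omega>
    by (rule sum.reindex_bij_witness[of _ ?s ?s]) (use ss sG FH in auto)
  then show ?thesis unfolding EE_def by simp
qed

lemma EE_nonneg: "(\<And>\<omega> w. 0 \<le> F \<omega> w) \<Longrightarrow> 0 \<le> E F"
  using EE_mono[of "\<lambda>\<omega> w. 0" F] EE_const[of 0] by simp

lemma AL:
  assumes "finite I" "\<forall>j\<in>I. j < D \<and> j \<in> K \<and> j + D \<in> K \<and> W (j + D) = W j"
  shows "\<forall>Z b r \<epsilon>. (\<forall>\<omega> w. 0 \<le> Z \<omega> w \<and> Z \<omega> w \<le> 1) \<longrightarrow> (\<forall>j\<in>I. indep Z (j + D)) \<longrightarrow>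
    (\<forall>i\<in>I. \<forall>\<omega> w. 0 \<le> b i \<omega> w \<and> b i \<omega> w \<le> 1) \<longrightarrow>
    (\<forall>i\<in>I. indep (b i) i \<and> (\<forall>j\<in>I. indep (b i) (j + D))) \<longrightarrow>
    0 \<le> r \<longrightarrow> r \<le> 1 \<longrightarrow> 0 \<le> \<epsilon> \<longrightarrow> r - \<epsilon> \<le> E Z \<longrightarrow> E (dbl D I Z) \<le> r ^ (2 ^ card I) + \<epsilon> \<longrightarrow>
    \<bar>E (\<lambda>\<omega> w. (Z \<omega> w - r) * (\<Prod>i\<in>I. b i \<omega> w))\<bar> \<le> dlt (card I) \<epsilon>"
  using assms
proof (induction I rule: finite_induct)
  case empty
  show ?case
  proof (intro allI impI)
    fix Z :: "'o \<Rightarrow> (nat \<Rightarrow> nat) \<Rightarrow> real" and b :: "nat \<Rightarrow> 'o \<Rightarrow> (nat \<Rightarrow> nat) \<Rightarrow> real" and r \<epsilon> :: real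
    assume "r - \<epsilon> \<le> E Z" "E (dbl D {} Z) \<le> r ^ (2 ^ card {}) + \<epsilon>"
    moreover have "E (\<lambda>\<omega> w. (Z \<omega> w - r) * (\<Prod>i\<in>{}. b i \<omega> w)) = E Z - r"
      using EE_diff[of Z "\<lambda>\<omega> w. r"] EE_const[of r] by simp
    ultimately show "\<bar>E (\<lambda>\<omega> w. (Z \<omega> w - r) * (\<Prod>i\<in>{}. b i \<omega> w))\<bar> \<le> dlt (card {}) \<epsilon>"
      by (simp add: dbl_empty)
  qed
next
  case (insert d I')
  have dD: "d < D" "d \<in> K" "d + D \<in> K" "W (d + D) = W d" using insert.prems by auto
  have pI': "\<forall>j\<in>I'. j < D \<and> j \<in> K \<and> j + D \<in> K \<and> W (j + D) = W j" using insert.prems by auto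
  note IH = insert.IH[OF pI', rule_format]
  have allD: "\<forall>j\<in>insert d I'. j < D" using insert.prems by auto
  show ?case
  proof (intro allI impI)
    fix Z :: "'o \<Rightarrow> (nat \<Rightarrow> nat) \<Rightarrow> real" and b :: "nat \<Rightarrow> 'o \<Rightarrow> (nat \<Rightarrow> nat) \<Rightarrow> real" and r \<epsilon> :: real
    assume Z01: "\<forall>\<omega> w. 0 \<le> Z \<omega> w \<and> Z \<omega> w \<le> 1"
      and Zi: "\<forall>j\<in>insert d I'. indep Z (j + D)"
      and b01: "\<forall>i\<in>insert d I'. \<forall>\<omega> w. 0 \<le> b i \<omega> w \<and> b i \<omega> w \<le> 1"
      and bi: "\<forall>i\<in>insert d I'. indep (b i) i \<and> (\<forall>j\<in>insert d I'. indep (b i) (j + D))"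
      and r0: "0 \<le> r" and r1: "r \<le> 1" and e0: "0 \<le> \<epsilon>" and EZ: "r - \<epsilon> \<le> E Z"
      and Edbl: "E (dbl D (insert d I') Z) \<le> r ^ (2 ^ card (insert d I')) + \<epsilon>"
    define \<epsilon>' where "\<epsilon>' = 2 * (\<epsilon> + sqrt \<epsilon>)"
    define m where "m = card I'"
    have cardI: "card (insert d I') = Suc m" using insert.hyps by (simp add: m_def)
    have se: "0 \<le> sqrt \<epsilon>" using e0 by simp
    have e'0: "0 \<le> \<epsilon>'" "\<epsilon> \<le> \<epsilon>'" "2 * \<epsilon> \<le> \<epsilon>'" "sqrt \<epsilon> \<le> \<epsilon>'" using e0 se by (auto simp: \<epsilon>'_def)
    define B' where "B' \<omega> w = (\<Prod>i\<in>I'. b i \<omega> w)" for \<omega> w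
    define Y where "Y \<omega> w = (Z \<omega> w - r) * B' \<omega> w" for \<omega> w
    define b2 where "b2 i \<omega> w = b i \<omega> w * b i \<omega> (mix D {d} w)" for i \<omega> w
    define B2 where "B2 \<omega> w = (\<Prod>i\<in>I'. b2 i \<omega> w)" for \<omega> w
    define Z2 where "Z2 \<omega> w = Z \<omega> w * Z \<omega> (mix D {d} w)" for \<omega> w
    have eq0: "E (\<lambda>\<omega> w. (Z \<omega> w - r) * (\<Prod>i\<in>insert d I'. b i \<omega> w)) = E (\<lambda>\<omega> w. b d \<omega> w * Y \<omega> w)"
      using insert.hyps by (simp add: Y_def B'_def mult_ac)
    have bdi: "indep (b d) d" using bi by auto
    have bd01: "\<forall>\<omega> w. 0 \<le> b d \<omega> w \<and> b d \<omega> w \<le> 1" using b01 by auto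
    have Yi: "indep Y (d + D)"
      unfolding Y_def[abs_def] B'_def[abs_def]
      by (intro indep_mult indep_diffc indep_prod) (use Zi bi in auto)
    have cs: "(E (\<lambda>\<omega> w. b d \<omega> w * Y \<omega> w))^2 \<le> E (\<lambda>\<omega> w. Y \<omega> w * Y \<omega> (mix D {d} w))"
      by (rule keyCS[OF dD(2,3,4) bdi bd01 Yi])
    have expand: "Y \<omega> w * Y \<omega> (mix D {d} w) = (Z2 \<omega> w - r^2) * B2 \<omega> w - r * ((Z \<omega> w - r) * B2 \<omega> w) - r * ((Z \<omega> (mix D {d} w) - r) * B2 \<omega> w)" for \<omega> w
    proof -
      have e: "B2 \<omega> w = B' \<omega> w * B' \<omega> (mix D {d} w)"
        by (simp add: B'_def B2_def b2_def prod.distrib)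
      show ?thesis unfolding Y_def Z2_def e by (simp add: algebra_simps power2_eq_square)
    qed
    have swap: "E (\<lambda>\<omega> w. (Z \<omega> (mix D {d} w) - r) * B2 \<omega> w) = E (\<lambda>\<omega> w. (Z \<omega> w - r) * B2 \<omega> w)"
    proof (rule EE_swap[OF dD(2) dD(3) dD(4)])
      show "d \<noteq> d + D" using Dpos by simp
      fix \<omega> and w :: "nat \<Rightarrow> nat"
      let ?sw = "w(d := w (d + D), d + D := w d)"
      have dDne: "d \<noteq> d + D" using Dpos by simp
      have Zid: "Z \<omega> (mix D {d} ?sw) = Z \<omega> w"
      proof -
        have "mix D {d} ?sw = w(d + D := w d)" unfolding mix1 using dDne by (auto simp: fun_eq_iff)
        then show ?thesis using Zi unfolding indep_def by (metis fun_upd_triv fun_upd_upd insertI1)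
      qed
      have bid: "b i \<omega> ?sw * b i \<omega> (mix D {d} ?sw) = b i \<omega> w * b i \<omega> (mix D {d} w)" if "i \<in> I'" for i
      proof -
        have idD: "indep (b i) (d + D)" using bi that by auto
        have 1: "b i \<omega> ?sw = b i \<omega> (mix D {d} w)"
          using idD unfolding indep_def mix1 by metis
        have "mix D {d} ?sw = w(d + D := w d)" unfolding mix1 using dDne by (auto simp: fun_eq_iff)
        then have 2: "b i \<omega> (mix D {d} ?sw) = b i \<omega> w"
          using idD unfolding indep_def by metis
        show ?thesis using 1 2 by simp
      qed
      show "(Z \<omega> (mix D {d} ?sw) - r) * B2 \<omega> ?sw = (Z \<omega> w - r) * B2 \<omega> w"
        unfolding Zid B2_def b2_def using bid by (simp cong: prod.cong)
    qed
    have b201: "\<forall>i\<in>I'. \<forall>\<omega> w. 0 \<le> b2 i \<omega> w \<and> b2 i \<omega> w \<le> 1"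
      using b01 by (auto simp: b2_def intro: mult_le_one)
    have b2i: "\<forall>i\<in>I'. indep (b2 i) i \<and> (\<forall>j\<in>I'. indep (b2 i) (j + D))"
    proof (intro ballI conjI)
      fix i assume i: "i \<in> I'"
      have idi: "i \<noteq> d" "i < D" using i insert.hyps pI' by auto
      show "indep (b2 i) i" unfolding b2_def[abs_def]
        by (intro indep_mult indep_mix[of "b i" i "{d}"]) (use bi i idi in auto)
      fix j assume j: "j \<in> I'"
      have jdi: "j \<noteq> d" "j < D" using j insert.hyps pI' by auto
      show "indep (b2 i) (j + D)" unfolding b2_def[abs_def]
        by (intro indep_mult indep_mix[of "b i" "j + D" "{d}"]) (use bi i j jdi dD in auto)
    qed
    have Z201: "\<forall>\<omega> w. 0 \<le> Z2 \<omega> w \<and> Z2 \<omega> w \<le> 1"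
      using Z01 by (auto simp: Z2_def intro: mult_le_one)
    have Z2i: "\<forall>j\<in>I'. indep Z2 (j + D)"
    proof
      fix j assume j: "j \<in> I'"
      have jdi: "j \<noteq> d" "j < D" using j insert.hyps pI' by auto
      show "indep Z2 (j + D)" unfolding Z2_def[abs_def]
        by (intro indep_mult indep_mix[of Z "j + D" "{d}"]) (use Zi j jdi dD in auto)
    qed
    have EZ0: "0 \<le> E Z" using Z01 by (intro EE_nonneg) auto
    have one01: "\<forall>\<omega> w. 0 \<le> (1::real) \<and> (1::real) \<le> 1" by simp
    have EZ2: "(E Z)^2 \<le> E Z2"
      using keyCS[OF dD(2,3,4) indep_const one01, of Z] Zi unfolding Z2_def by simp
    have EZ2': "r^2 - \<epsilon>' \<le> E Z2"
    proof (cases "r - \<epsilon> \<ge> 0")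
      case True
      have "(r - \<epsilon>)^2 \<le> (E Z)^2" using True EZ by (intro power_mono) auto
      moreover have "r^2 - \<epsilon>' \<le> (r - \<epsilon>)^2"
      proof -
        have "r * \<epsilon> \<le> 1 * \<epsilon>" using r1 e0 by (intro mult_right_mono) auto
        moreover have "(r - \<epsilon>)^2 = r^2 - 2 * (r * \<epsilon>) + \<epsilon>^2" by (simp add: power2_eq_square algebra_simps)
        moreover have "0 \<le> \<epsilon>^2" by simp
        ultimately show ?thesis using e'0 by linarith
      qed
      ultimately show ?thesis using EZ2 by linarith
    next
      case False
      have "r * r \<le> 1 * r" using r0 r1 by (intro mult_right_mono) auto
      then have "r^2 \<le> \<epsilon>'" using False e'0 by (simp add: power2_eq_square)
      moreover have "0 \<le> (E Z)^2" by simp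
      ultimately show ?thesis using EZ2 by linarith
    qed
    have dblZ2: "E (dbl D I' Z2) = E (dbl D (insert d I') Z)"
    proof -
      have "dbl D (insert d I') Z = dbl D I' Z2"
        unfolding Z2_def[abs_def] by (intro ext) (rule dbl_ins1[OF insert.hyps allD])
      then show ?thesis by simp
    qed
    have pw: "r ^ (2 ^ card (insert d I')) = (r^2) ^ (2 ^ m)"
      unfolding cardI by (simp add: power_mult[symmetric] mult.commute)
    have h1: "\<bar>E (\<lambda>\<omega> w. (Z2 \<omega> w - r^2) * B2 \<omega> w)\<bar> \<le> dlt m \<epsilon>'"
      unfolding B2_def m_def
      by (rule IH) (use Z201 Z2i b201 b2i r0 r1 e'0 EZ2' dblZ2 Edbl pw m_def in \<open>auto simp: power_le_one\<close>)
    have dbli: "indep (dbl D I' Z) (d + D)"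
      by (rule indep_dbl) (use Zi insert.hyps dD pI' in auto)
    have "(E (dbl D I' Z))^2 \<le> E (dbl D (insert d I') Z)"
    proof -
      have "dbl D (insert d I') Z = (\<lambda>\<omega> w. dbl D I' Z \<omega> w * dbl D I' Z \<omega> (mix D {d} w))"
        by (intro ext) (rule dbl_ins2[OF insert.hyps allD])
      then show ?thesis using keyCS[OF dD(2,3,4) indep_const one01 dbli] by simp
    qed
    also have "\<dots> \<le> r ^ (2 ^ Suc m) + \<epsilon>" using Edbl cardI by simp
    finally have sq: "(E (dbl D I' Z))^2 \<le> r ^ (2 ^ Suc m) + \<epsilon>" .
    have "E (dbl D I' Z) \<le> sqrt (r ^ (2 ^ Suc m) + \<epsilon>)"
      using sq real_le_rsqrt by (metis abs_ge_self order.trans real_sqrt_abs real_sqrt_le_mono)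
    also have "\<dots> \<le> sqrt (r ^ (2 ^ Suc m)) + sqrt \<epsilon>"
      by (rule sqrt_add_le_add_sqrt) (use r0 e0 in auto)
    also have "sqrt (r ^ (2 ^ Suc m)) = r ^ (2 ^ m)"
    proof -
      have "r ^ (2 ^ Suc m) = (r ^ (2 ^ m))^2" by (simp add: power_mult[symmetric] mult.commute)
      then show ?thesis using r0 by simp
    qed
    finally have Edbl': "E (dbl D I' Z) \<le> r ^ (2 ^ card I') + \<epsilon>'" using e'0 m_def by simp
    have h2: "\<bar>E (\<lambda>\<omega> w. (Z \<omega> w - r) * B2 \<omega> w)\<bar> \<le> dlt m \<epsilon>'"
      unfolding B2_def m_def
      by (rule IH) (use Z01 b201 b2i Zi r0 r1 e'0 EZ Edbl' in auto)
    have "E (\<lambda>\<omega> w. Y \<omega> w * Y \<omega> (mix D {d} w))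
        = E (\<lambda>\<omega> w. (Z2 \<omega> w - r^2) * B2 \<omega> w) - r * E (\<lambda>\<omega> w. (Z \<omega> w - r) * B2 \<omega> w)
          - r * E (\<lambda>\<omega> w. (Z \<omega> (mix D {d} w) - r) * B2 \<omega> w)"
      unfolding expand EE_diff EE_cmult ..
    also have "\<dots> = E (\<lambda>\<omega> w. (Z2 \<omega> w - r^2) * B2 \<omega> w) - 2 * r * E (\<lambda>\<omega> w. (Z \<omega> w - r) * B2 \<omega> w)"
      unfolding swap by simp
    also have "\<dots> \<le> 3 * dlt m \<epsilon>'"
    proof -
      have "- (2 * r * E (\<lambda>\<omega> w. (Z \<omega> w - r) * B2 \<omega> w)) \<le> 2 * dlt m \<epsilon>'"
      proof -
        have "\<bar>r * E (\<lambda>\<omega> w. (Z \<omega> w - r) * B2 \<omega> w)\<bar> \<le> 1 * dlt m \<epsilon>'"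
          unfolding abs_mult using r0 r1 h2 by (intro mult_mono) auto
        then show ?thesis by linarith
      qed
      then show ?thesis using h1 by linarith
    qed
    finally have "(E (\<lambda>\<omega> w. b d \<omega> w * Y \<omega> w))^2 \<le> 3 * dlt m \<epsilon>'" using cs by linarith
    then have "\<bar>E (\<lambda>\<omega> w. b d \<omega> w * Y \<omega> w)\<bar> \<le> sqrt (3 * dlt m \<epsilon>')"
      using real_le_rsqrt real_sqrt_abs by (metis real_sqrt_le_mono)
    then show "\<bar>E (\<lambda>\<omega> w. (Z \<omega> w - r) * (\<Prod>i\<in>insert d I'. b i \<omega> w))\<bar> \<le> dlt (card (insert d I')) \<epsilon>"
      unfolding eq0 cardI by (simp add: \<epsilon>'_def)
  qed
qed

end



lemma tv_ge:
  "\<bar>measure_pmf.prob q1 A - measure_pmf.prob q2 A\<bar> \<le> tv_dist q1 q2"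
proof -
  have "bdd_above (range (\<lambda>A. \<bar>measure_pmf.prob q1 A - measure_pmf.prob q2 A\<bar>))"
  proof (rule bdd_aboveI[of _ 1], clarify)
    fix B
    have "0 \<le> measure_pmf.prob q1 B" "measure_pmf.prob q1 B \<le> 1"
         "0 \<le> measure_pmf.prob q2 B" "measure_pmf.prob q2 B \<le> 1"
      by (auto simp: measure_pmf.prob_le_1)
    then show "\<bar>measure_pmf.prob q1 B - measure_pmf.prob q2 B\<bar> \<le> 1" by linarith
  qed
  then show ?thesis unfolding tv_dist_def by (rule cSUP_upper[OF UNIV_I])
qed

lemma sorted_img:
  assumes "finite V" "strict_mono_on V \<psi>"
  shows "sorted_list_of_set (\<psi> ` V) = map \<psi> (sorted_list_of_set V)"
proof -
  have inj: "inj_on \<psi> V" using assms(2) by (rule strict_mono_on_imp_inj_on)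
  have sw: "sorted_wrt (<) (sorted_list_of_set V)" by (rule strict_sorted_list_of_set)
  have "sorted_wrt (<) (map \<psi> (sorted_list_of_set V))"
    unfolding sorted_wrt_map
    by (rule sorted_wrt_mono_rel[OF _ sw]) (use assms in \<open>auto simp: strict_mono_on_def\<close>)
  then have s1: "sorted (map \<psi> (sorted_list_of_set V))" "distinct (map \<psi> (sorted_list_of_set V))"
    by (auto simp: strict_sorted_iff)
  show ?thesis
    by (rule sorted_distinct_set_unique) (use s1 assms in auto)
qed

lemma spread:
  assumes sp: "spreadable \<eta> d n p" and V: "V \<subseteq> {1..n}" "d \<le> card V"
    and mono: "strict_mono_on V \<psi>" and img: "\<psi> ` V \<subseteq> {1..n}"
    and G: "\<forall>t\<in>\<G>. t \<subseteq> V \<and> card t = d"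
  shows "\<bar>measure_pmf.prob p {f. \<forall>t\<in>\<G>. f (\<psi> ` t) = c t} - measure_pmf.prob p {f. \<forall>t\<in>\<G>. f t = c t}\<bar> \<le> \<eta>"
proof -
  have finV: "finite V" using V(1) finite_subset by blast
  define sJ where "sJ = sorted_list_of_set V"
  define N where "N = card V"
  define K where "K = \<psi> ` V"
  have inj: "inj_on \<psi> V" using mono by (rule strict_mono_on_imp_inj_on)
  have cK: "card K = N" unfolding K_def N_def using inj by (simp add: card_image)
  have sK: "sorted_list_of_set K = map \<psi> sJ" unfolding K_def sJ_def by (rule sorted_img[OF finV mono])
  have lsJ: "length sJ = N" by (simp add: sJ_def N_def)
  have dsJ: "distinct sJ" by (simp add: sJ_def)
  have setJ: "set sJ = V" using finV by (simp add: sJ_def)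
  define ix where "ix t = {i. i < N \<and> sJ ! i \<in> t}" for t
  have img1: "(\<lambda>i. sJ ! i) ` ix t = t" if "t \<subseteq> V" for t
  proof
    show "(\<lambda>i. sJ ! i) ` ix t \<subseteq> t" by (auto simp: ix_def)
    show "t \<subseteq> (\<lambda>i. sJ ! i) ` ix t"
    proof
      fix x assume "x \<in> t"
      then have "x \<in> set sJ" using that setJ by auto
      then obtain i where "i < length sJ" "sJ ! i = x" by (auto simp: in_set_conv_nth)
      then show "x \<in> (\<lambda>i. sJ ! i) ` ix t" using \<open>x \<in> t\<close> lsJ by (auto simp: ix_def)
    qed
  qed
  have injn: "inj_on (\<lambda>i. sJ ! i) (ix t)" for t
    using dsJ lsJ by (auto simp: inj_on_def ix_def nth_eq_iff_index_eq)
  have ixd: "ix t \<in> dsets {..<N} d" if "t \<in> \<G>" for t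
  proof -
    have "card (ix t) = card ((\<lambda>i. sJ ! i) ` ix t)" using injn by (simp add: card_image)
    also have "\<dots> = d" using img1 G that by auto
    finally show ?thesis by (auto simp: dsets_def ix_def)
  qed
  have img2: "(\<lambda>i. map \<psi> sJ ! i) ` ix t = \<psi> ` t" if "t \<subseteq> V" for t
  proof -
    have "(\<lambda>i. map \<psi> sJ ! i) ` ix t = \<psi> ` ((\<lambda>i. sJ ! i) ` ix t)"
      using lsJ by (auto simp: ix_def image_image)
    then show ?thesis using img1[OF that] by simp
  qed
  define Ev where "Ev = {g. \<forall>t\<in>\<G>. g (ix t) = c t}"
  have P1: "measure_pmf.prob (subarray_law d V p) Ev = measure_pmf.prob p {f. \<forall>t\<in>\<G>. f t = c t}"
  proof -
    have "(\<lambda>f t. if t \<in> dsets {..<card V} d then f ((\<lambda>i. sorted_list_of_set V ! i) ` t) else undefined) -` Ev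
       = {f. \<forall>t\<in>\<G>. f t = c t}"
      using ixd img1 G unfolding Ev_def sJ_def[symmetric] N_def[symmetric] by auto
    then show ?thesis unfolding subarray_law_def by simp
  qed
  have P2: "measure_pmf.prob (subarray_law d K p) Ev = measure_pmf.prob p {f. \<forall>t\<in>\<G>. f (\<psi> ` t) = c t}"
  proof -
    have "(\<lambda>f t. if t \<in> dsets {..<card K} d then f ((\<lambda>i. sorted_list_of_set K ! i) ` t) else undefined) -` Ev
       = {f. \<forall>t\<in>\<G>. f (\<psi> ` t) = c t}"
      using ixd img2 G unfolding Ev_def sK cK by auto
    then show ?thesis unfolding subarray_law_def by simp
  qed
  have "tv_dist (subarray_law d V p) (subarray_law d K p) \<le> \<eta>"
    using sp V img cK unfolding spreadable_def K_def N_def by auto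
  moreover have "\<bar>measure_pmf.prob (subarray_law d V p) Ev - measure_pmf.prob (subarray_law d K p) Ev\<bar>
      \<le> tv_dist (subarray_law d V p) (subarray_law d K p)" by (rule tv_ge)
  ultimately show ?thesis unfolding P1 P2 by linarith
qed



lemma telescope:
  fixes p :: "'a pmf" and F :: "'b set" and Aev :: "'b \<Rightarrow> 'a set"
  assumes finF: "finite F"
    and key: "\<And>s F'. s \<in> F \<Longrightarrow> F' \<subseteq> F - {s} \<Longrightarrow>
      \<bar>measure_pmf.prob p (Aev s \<inter> (\<Inter>t\<in>F'. Aev t)) - measure_pmf.prob p (Aev s) * measure_pmf.prob p (\<Inter>t\<in>F'. Aev t)\<bar> \<le> \<kappa>"
  shows "\<bar>measure_pmf.prob p (\<Inter>t\<in>F. Aev t) - (\<Prod>t\<in>F. measure_pmf.prob p (Aev t))\<bar> \<le> real (card F) * \<kappa>"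
proof -
  have "\<bar>measure_pmf.prob p (\<Inter>t\<in>F. Aev t) - (\<Prod>t\<in>F. measure_pmf.prob p (Aev t))\<bar> \<le> real (card F) * \<kappa>"
    using finF subset_refl
  proof (induction F rule: finite_subset_induct')
    case empty
    then show ?case by simp
  next
    case (insert a F2)
    let ?PA = "measure_pmf.prob p (Aev a)"
    let ?PG = "measure_pmf.prob p (\<Inter>t\<in>F2. Aev t)"
    let ?Pr = "\<Prod>t\<in>F2. measure_pmf.prob p (Aev t)"
    have k: "\<bar>measure_pmf.prob p (Aev a \<inter> (\<Inter>t\<in>F2. Aev t)) - ?PA * ?PG\<bar> \<le> \<kappa>"
      using key[of a F2] insert by auto
    have "\<bar>?PA * (?PG - ?Pr)\<bar> \<le> 1 * (real (card F2) * \<kappa>)"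
      unfolding abs_mult using insert.IH
      by (intro mult_mono) (auto simp: measure_pmf.prob_le_1)
    then have "\<bar>measure_pmf.prob p (Aev a \<inter> (\<Inter>t\<in>F2. Aev t)) - ?PA * ?Pr\<bar> \<le> \<kappa> + real (card F2) * \<kappa>"
      using k by (simp add: abs_le_iff algebra_simps)
    then show ?case using insert.hyps by (simp add: algebra_simps)
  qed
  then show ?thesis .
qed

lemma powdiff:
  fixes x y :: real
  assumes "0 \<le> x" "x \<le> y" "y \<le> 1"
  shows "y ^ N - x ^ N \<le> real N * (y - x)"
proof (induction N)
  case 0 then show ?case by simp
next
  case (Suc N)
  have "y ^ Suc N - x ^ Suc N = y * (y ^ N - x ^ N) + x ^ N * (y - x)" by (simp add: algebra_simps)
  also have "\<dots> \<le> 1 * (real N * (y - x)) + 1 * (y - x)"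
  proof (intro add_mono mult_mono)
    show "y ^ N - x ^ N \<le> real N * (y - x)" by (rule Suc.IH)
    show "x ^ N \<le> 1" using assms by (intro power_le_one) auto
    show "0 \<le> y ^ N - x ^ N" using assms by (simp add: power_mono)
  qed (use assms in auto)
  finally show ?case by (simp add: algebra_simps)
qed

lemma prod_ind:
  assumes "finite A"
  shows "(\<Prod>x\<in>A. if Q x then 1 else 0 :: real) = (if \<forall>x\<in>A. Q x then 1 else 0)"
  using assms by (induction A rule: finite_induct) auto

lemma avg_close:
  fixes g :: "'a \<Rightarrow> real"
  assumes "finite G" "G \<noteq> {}" "\<And>w. w \<in> G \<Longrightarrow> \<bar>g w - c\<bar> \<le> e"
  shows "\<bar>(\<Sum>w\<in>G. g w) / real (card G) - c\<bar> \<le> e"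
proof -
  have cG: "real (card G) > 0" using assms by (simp add: card_gt_0_iff)
  have eq: "(\<Sum>w\<in>G. g w) / real (card G) - c = (\<Sum>w\<in>G. g w - c) / real (card G)"
    using cG by (simp add: sum_subtractf field_simps)
  have b: "\<bar>\<Sum>w\<in>G. g w - c\<bar> \<le> e * real (card G)"
  proof -
    have "(\<Sum>w\<in>G. \<bar>g w - c\<bar>) \<le> (\<Sum>w\<in>G. e)" using assms(3) by (rule sum_mono)
    then show ?thesis by (intro order.trans[OF sum_abs]) (simp add: mult.commute)
  qed
  show ?thesis unfolding eq abs_divide abs_of_pos[OF cG] using b cG by (simp add: pos_divide_le_eq)
qed

lemma dlt_nonneg: "0 \<le> x \<Longrightarrow> 0 \<le> dlt m x"
  by (induction m arbitrary: x) auto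

lemma dlt_mono: "0 \<le> x \<Longrightarrow> x \<le> y \<Longrightarrow> dlt m x \<le> dlt m y"
proof (induction m arbitrary: x y)
  case 0 then show ?case by simp
next
  case (Suc m)
  have "sqrt x \<le> sqrt y" by (rule real_sqrt_le_mono[OF Suc.prems(2)])
  then have "2 * (x + sqrt x) \<le> 2 * (y + sqrt y)" using Suc.prems by (intro mult_left_mono add_mono) auto
  then have "dlt m (2 * (x + sqrt x)) \<le> dlt m (2 * (y + sqrt y))"
    using Suc.prems by (intro Suc.IH) auto
  then show ?case by simp
qed

lemma dlt_small: "0 < e \<Longrightarrow> \<exists>\<rho>>0. \<forall>x. 0 \<le> x \<longrightarrow> x \<le> \<rho> \<longrightarrow> dlt m x < e"
proof (induction m arbitrary: e)
  case 0
  then show ?case by (intro exI[of _ "e/2"]) auto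
next
  case (Suc m)
  have "0 < e^2 / 3" using Suc.prems by simp
  then obtain \<rho> where \<rho>: "\<rho> > 0" "\<forall>x. 0 \<le> x \<longrightarrow> x \<le> \<rho> \<longrightarrow> dlt m x < e^2 / 3"
    using Suc.IH by blast
  define \<sigma> where "\<sigma> = min (\<rho> / 4) ((\<rho> / 4)^2)"
  have \<sigma>0: "\<sigma> > 0" using \<rho> by (simp add: \<sigma>_def)
  show ?case
  proof (intro exI[of _ \<sigma>] conjI allI impI \<sigma>0)
    fix x assume x: "0 \<le> x" "x \<le> \<sigma>"
    have "sqrt x \<le> sqrt ((\<rho> / 4)^2)" using x by (intro real_sqrt_le_mono) (simp add: \<sigma>_def)
    then have sx: "4 * sqrt x \<le> \<rho>" using \<rho> by simp
    have "4 * x \<le> \<rho>" using x by (simp add: \<sigma>_def)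
    then have "(4 * x) / 2 + (4 * sqrt x) / 2 \<le> \<rho> / 2 + \<rho> / 2" using sx by (intro add_mono divide_right_mono) auto
    moreover have "2 * (x + sqrt x) = (4 * x) / 2 + (4 * sqrt x) / 2" by simp
    ultimately have le: "2 * (x + sqrt x) \<le> \<rho>" by simp
    have nn: "0 \<le> 2 * (x + sqrt x)" using x by simp
    have "dlt m (2 * (x + sqrt x)) < e^2 / 3" using \<rho>(2) nn le by blast
    then have "3 * dlt m (2 * (x + sqrt x)) < e^2" by simp
    then have "sqrt (3 * dlt m (2 * (x + sqrt x))) < sqrt (e^2)" by (rule real_sqrt_less_mono)
    moreover have "sqrt (e^2) = e" using Suc.prems by simp
    ultimately have "sqrt (3 * dlt m (2 * (x + sqrt x))) < e" by simp
    then show "dlt (Suc m) x < e" by (simp only: dlt.simps)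
  qed
qed



locale kectx =
  fixes n :: nat and V s :: "nat set" and L1 :: nat
  assumes Vn: "V \<subseteq> {1..n}" and sV: "s \<subseteq> V" and L1pos: "0 < L1" and mL: "card V * L1 \<le> n"
begin

definition idx where "idx v = card {x\<in>V. x < v}"
definition blk where "blk v = {1 + idx v * L1 ..< 1 + Suc (idx v) * L1}"
definition DD where "DD = Suc n"
definition WW where "WW j = blk (if j \<le> n then j else j - DD)"
definition KK where "KK = s \<union> (\<lambda>u. u + DD) ` s"
definition psi where "psi w v = (if v \<in> s then w v else 1 + idx v * L1)"

lemma finV: "finite V" using Vn finite_subset by blast
lemma fins: "finite s" using sV finV finite_subset by blast

lemma idx_lt: "v \<in> V \<Longrightarrow> idx v < card V"
  unfolding idx_def by (rule psubset_card_mono[OF finV]) auto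

lemma idx_mono: "v \<in> V \<Longrightarrow> v' \<in> V \<Longrightarrow> v < v' \<Longrightarrow> idx v < idx v'"
  unfolding idx_def by (rule psubset_card_mono) (use finV in auto)

lemma blk_sub: "v \<in> V \<Longrightarrow> blk v \<subseteq> {1..n}"
proof -
  assume v: "v \<in> V"
  have "Suc (idx v) * L1 \<le> card V * L1" using idx_lt[OF v] by (intro mult_le_mono1) auto
  then show ?thesis using mL by (auto simp: blk_def)
qed

lemma blk_order: "v \<in> V \<Longrightarrow> v' \<in> V \<Longrightarrow> v < v' \<Longrightarrow> x \<in> blk v \<Longrightarrow> y \<in> blk v' \<Longrightarrow> x < y"
proof -
  assume a: "v \<in> V" "v' \<in> V" "v < v'" "x \<in> blk v" "y \<in> blk v'"
  have "Suc (idx v) * L1 \<le> idx v' * L1" using idx_mono[OF a(1-3)] by (intro mult_le_mono1) auto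
  then show "x < y" using a(4,5) by (auto simp: blk_def)
qed

lemma blk_card: "card (blk v) = L1"
  by (simp add: blk_def)

lemma blk_base: "1 + idx v * L1 \<in> blk v"
  using L1pos by (simp add: blk_def)

lemma blk_ne: "blk v \<noteq> {}" using blk_base by auto

lemma sn: "u \<in> s \<Longrightarrow> u \<le> n" using sV Vn by auto

lemma W_s: "u \<in> s \<Longrightarrow> WW u = blk u" "u \<in> s \<Longrightarrow> WW (u + DD) = blk u"
  using sn by (auto simp: WW_def DD_def)

lemma DDpos: "0 < DD" by (simp add: DD_def)

lemma finK: "finite KK" using fins by (simp add: KK_def)

lemma KK_s: "u \<in> s \<Longrightarrow> u \<in> KK" "u \<in> s \<Longrightarrow> u + DD \<in> KK"
  by (auto simp: KK_def)

lemma finW: "\<forall>i\<in>KK. finite (WW i) \<and> WW i \<noteq> {}"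
  using L1pos by (auto simp: WW_def blk_def)

lemma wblk: "w \<in> PiE KK WW \<Longrightarrow> u \<in> s \<Longrightarrow> w u \<in> blk u \<and> w (u + DD) \<in> blk u"
proof -
  assume w: "w \<in> PiE KK WW" and u: "u \<in> s"
  have h: "\<forall>i\<in>KK. w i \<in> WW i" using w by (simp add: PiE_iff)
  have "w u \<in> WW u" using h KK_s(1)[OF u] by blast
  moreover have "w (u + DD) \<in> WW (u + DD)" using h KK_s(2)[OF u] by blast
  ultimately show ?thesis using W_s[OF u] by simp
qed

lemma psi_blk: "w \<in> PiE KK WW \<Longrightarrow> v \<in> V \<Longrightarrow> psi w v \<in> blk v"
  using wblk blk_base by (auto simp: psi_def)

lemma psi_mono: "w \<in> PiE KK WW \<Longrightarrow> strict_mono_on V (psi w)"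
  by (auto simp: strict_mono_on_def intro: blk_order psi_blk)

lemma psi_img: "w \<in> PiE KK WW \<Longrightarrow> psi w ` V \<subseteq> {1..n}"
  using psi_blk blk_sub by blast

lemma psi_upd: "v \<notin> s \<Longrightarrow> psi (w(v := x)) = psi w"
  by (auto simp: psi_def fun_eq_iff)

lemma psi_upd2: "u \<notin> t \<Longrightarrow> psi (w(u := x)) ` t = psi w ` t"
  by (auto simp: psi_def)

lemma mix_blk: "w \<in> PiE KK WW \<Longrightarrow> u \<in> s \<Longrightarrow> mix DD T w u \<in> blk u"
  using wblk by (auto simp: mix_def)

lemma mix_mono: "w \<in> PiE KK WW \<Longrightarrow> strict_mono_on s (mix DD T w)"
  using sV by (auto simp: strict_mono_on_def intro: blk_order mix_blk)

lemma mix_img: "w \<in> PiE KK WW \<Longrightarrow> mix DD T w ` s \<subseteq> {1..n}"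
  using mix_blk blk_sub sV by blast

lemma psi_s: "psi w ` s = w ` s"
  by (auto simp: psi_def)

lemma psi_on_s: "v \<in> s \<Longrightarrow> psi w v = w v"
  by (simp add: psi_def)


lemma blk_disj: "u \<in> V \<Longrightarrow> u' \<in> V \<Longrightarrow> x \<in> blk u \<Longrightarrow> x \<in> blk u' \<Longrightarrow> u = u'"
  by (metis blk_order less_irrefl linorder_neqE_nat)

context
  fixes w assumes w: "w \<in> PiE KK WW" and nd: "\<forall>u\<in>s. w u \<noteq> w (u + DD)"
begin

definition Hs where "Hs u = {w u, w (u + DD)}"

lemma Hs_blk: "u \<in> s \<Longrightarrow> Hs u \<subseteq> blk u"
  using wblk[OF w] by (auto simp: Hs_def)

lemma mix_Hs: "u \<in> s \<Longrightarrow> mix DD T w u \<in> Hs u"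
  by (auto simp: mix_def Hs_def)

lemma mix_inter: "u \<in> s \<Longrightarrow> (mix DD T w ` s) \<inter> Hs u = {mix DD T w u}"
proof
  assume u: "u \<in> s"
  show "{mix DD T w u} \<subseteq> mix DD T w ` s \<inter> Hs u" using u mix_Hs by auto
  show "mix DD T w ` s \<inter> Hs u \<subseteq> {mix DD T w u}"
  proof
    fix x assume "x \<in> mix DD T w ` s \<inter> Hs u"
    then obtain u' where u': "u' \<in> s" "x = mix DD T w u'" "x \<in> Hs u" by auto
    have "x \<in> blk u'" using mix_blk[OF w u'(1)] u'(2) by simp
    moreover have "x \<in> blk u" using Hs_blk[OF u] u'(3) by auto
    ultimately have "u = u'" using blk_disj u u'(1) sV by blast
    then show "x \<in> {mix DD T w u}" using u' by simp
  qed
qed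

lemma mix_inj: "inj_on (\<lambda>T. mix DD T w ` s) (Pow s)"
proof (rule inj_onI)
  fix T T' assume T: "T \<in> Pow s" "T' \<in> Pow s" and eq: "mix DD T w ` s = mix DD T' w ` s"
  have ee: "mix DD T w u = mix DD T' w u" if "u \<in> s" for u
    using mix_inter[OF that, of T] mix_inter[OF that, of T'] eq by simp
  have "u \<in> T \<longleftrightarrow> u \<in> T'" if "u \<in> s" for u
  proof -
    have e: "mix DD T w u = mix DD T' w u" by (rule ee[OF that])
    have "w u \<noteq> w (u + DD)" using nd that by auto
    then show ?thesis using e by (auto simp: mix_def split: if_splits)
  qed
  then show "T = T'" using T by auto
qed

lemma box_card: "card ((\<lambda>T. mix DD T w ` s) ` Pow s) = 2 ^ card s"
  using mix_inj fins by (simp add: card_image card_Pow)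

lemma box_is: "is_box (card s) n ((\<lambda>T. mix DD T w ` s) ` Pow s)"
proof -
  define ls where "ls = sorted_list_of_set s"
  have lls: "length ls = card s" by (simp add: ls_def)
  have sls: "set ls = s" using fins by (simp add: ls_def)
  have srt: "sorted_wrt (<) ls" by (simp add: ls_def)
  have lsin: "ls ! (i - 1) \<in> s" if "i \<in> {1..card s}" for i
    using that lls sls by (metis atLeastAtMost_iff diff_less less_le_trans nth_mem zero_less_one)
  have lsall: "\<exists>i\<in>{1..card s}. ls ! (i - 1) = u" if "u \<in> s" for u
  proof -
    have "u \<in> set ls" using that sls by simp
    then obtain j where "j < length ls" "ls ! j = u" by (auto simp: in_set_conv_nth)
    then show ?thesis using lls by (intro bexI[of _ "Suc j"]) auto
  qed
  define H where "H i = Hs (ls ! (i - 1))" for i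
  have conv: "(\<forall>i\<in>{1..card s}. P (H i)) \<longleftrightarrow> (\<forall>u\<in>s. P (Hs u))" for P
    using lsin lsall unfolding H_def by metis
  have fin_t: "finite (Hs u)" for u by (simp add: Hs_def)
  show ?thesis unfolding is_box_def
  proof (intro exI[of _ H] conjI)
    show "\<forall>i\<in>{1..card s}. H i \<subseteq> {1..n} \<and> card (H i) = 2"
    proof
      fix i assume i: "i \<in> {1..card s}"
      define u where "u = ls ! (i - 1)"
      have u: "u \<in> s" using lsin[OF i] by (simp add: u_def)
      have Hi: "H i = Hs u" by (simp add: H_def u_def)
      have "Hs u \<subseteq> {1..n}" using Hs_blk[OF u] blk_sub sV u by blast
      moreover have "card (Hs u) = 2" using nd u by (simp add: Hs_def)
      ultimately show "H i \<subseteq> {1..n} \<and> card (H i) = 2" unfolding Hi by simp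
    qed
    show "\<forall>i\<in>{1..<card s}. Max (H i) < Min (H (Suc i))"
    proof
      fix i assume i: "i \<in> {1..<card s}"
      have u: "ls ! (i - 1) \<in> s" and u': "ls ! i \<in> s"
        using lsin[of i] lsin[of "Suc i"] i by auto
      have lt: "ls ! (i - 1) < ls ! i" by (rule sorted_wrt_nth_less[OF srt]) (use i lls in auto)
      have "Max (H i) \<in> blk (ls ! (i - 1))"
        using Max_in[OF fin_t, of "ls ! (i - 1)"] Hs_blk[OF u] unfolding H_def by (auto simp: Hs_def)
      moreover have "Min (H (Suc i)) \<in> blk (ls ! i)"
        using Min_in[OF fin_t, of "ls ! i"] Hs_blk[OF u'] unfolding H_def by (auto simp: Hs_def)
      ultimately show "Max (H i) < Min (H (Suc i))"
        using blk_order u u' lt sV by blast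
    qed
    have conv2: "{t \<in> dsets {1..n} (card s). \<forall>i\<in>{1..card s}. card (t \<inter> H i) = 1}
        = {t \<in> dsets {1..n} (card s). \<forall>u\<in>s. card (t \<inter> Hs u) = 1}"
    proof -
      have "(\<forall>i\<in>{1..card s}. card (t \<inter> H i) = 1) \<longleftrightarrow> (\<forall>u\<in>s. card (t \<inter> Hs u) = 1)" for t
        using conv[of "\<lambda>X. card (t \<inter> X) = 1"] by simp
      then show ?thesis by blast
    qed
    show "(\<lambda>T. mix DD T w ` s) ` Pow s = {t \<in> dsets {1..n} (card s). \<forall>i\<in>{1..card s}. card (t \<inter> H i) = 1}"
      unfolding conv2
    proof
      show "(\<lambda>T. mix DD T w ` s) ` Pow s \<subseteq> {t \<in> dsets {1..n} (card s). \<forall>u\<in>s. card (t \<inter> Hs u) = 1}"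
      proof (rule image_subsetI)
        fix T assume T: "T \<in> Pow s"
        have "card (mix DD T w ` s) = card s"
          using strict_mono_on_imp_inj_on[OF mix_mono[OF w]] by (simp add: card_image)
        then have "mix DD T w ` s \<in> dsets {1..n} (card s)"
          using mix_img[OF w] by (simp add: dsets_def)
        moreover have "\<forall>u\<in>s. card (mix DD T w ` s \<inter> Hs u) = 1"
          using mix_inter by simp
        ultimately show "mix DD T w ` s \<in> {t \<in> dsets {1..n} (card s). \<forall>u\<in>s. card (t \<inter> Hs u) = 1}"
          by simp
      qed
      show "{t \<in> dsets {1..n} (card s). \<forall>u\<in>s. card (t \<inter> Hs u) = 1} \<subseteq> (\<lambda>T. mix DD T w ` s) ` Pow s"
      proof (rule subsetI)
        fix t assume "t \<in> {t \<in> dsets {1..n} (card s). \<forall>u\<in>s. card (t \<inter> Hs u) = 1}"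
        then have t: "t \<in> dsets {1..n} (card s)" and c1: "\<forall>u\<in>s. card (t \<inter> Hs u) = 1" by auto
        have tfin: "finite t" "card t = card s" using t by (auto simp: dsets_def intro: finite_subset)
        define pk where "pk u = the_elem (t \<inter> Hs u)" for u
        have pk: "pk u \<in> t \<and> pk u \<in> Hs u" if "u \<in> s" for u
        proof -
          have "card (t \<inter> Hs u) = 1" using c1 that by blast
          then obtain x where "t \<inter> Hs u = {x}" by (rule card_1_singletonE)
          then have "pk u = x" by (simp add: pk_def)
          moreover have "x \<in> t \<inter> Hs u" using \<open>t \<inter> Hs u = {x}\<close> by simp
          ultimately show ?thesis by simp
        qed
        have injpk: "inj_on pk s"
        proof (rule inj_onI)
          fix u u' assume uu: "u \<in> s" "u' \<in> s" "pk u = pk u'"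
          have "pk u \<in> blk u" using pk[OF uu(1)] Hs_blk[OF uu(1)] by auto
          moreover have "pk u \<in> blk u'" using pk[OF uu(2)] Hs_blk[OF uu(2)] uu(3) by auto
          ultimately show "u = u'" using blk_disj uu sV by blast
        qed
        have "pk ` s \<subseteq> t" using pk by auto
        moreover have "card (pk ` s) = card t" using injpk tfin by (simp add: card_image)
        ultimately have pkt: "pk ` s = t" using tfin by (intro card_subset_eq) auto
        define T where "T = {u\<in>s. pk u \<noteq> w u}"
        have "mix DD T w u = pk u" if "u \<in> s" for u
          using pk[OF that] that by (auto simp: mix_def T_def Hs_def)
        then have "mix DD T w ` s = t" using pkt by (auto simp: image_iff)
        moreover have "T \<in> Pow s" by (auto simp: T_def)
        ultimately show "t \<in> (\<lambda>T. mix DD T w ` s) ` Pow s" by blast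
      qed
    qed
  qed
qed

end

end



lemma sum_ind_prob:
  assumes "finite (set_pmf q)"
  shows "(\<Sum>\<omega>\<in>set_pmf q. pmf q \<omega> * (if Q \<omega> then 1 else 0)) = measure_pmf.prob q {\<omega>. Q \<omega>}"
proof -
  have "(\<Sum>\<omega>\<in>set_pmf q. pmf q \<omega> * (if Q \<omega> then 1 else 0)) = (\<Sum>\<omega>\<in>set_pmf q. if Q \<omega> then pmf q \<omega> else 0)"
    by (intro sum.cong) auto
  also have "\<dots> = sum (pmf q) {\<omega> \<in> set_pmf q. Q \<omega>}"
    using assms by (simp add: sum.inter_filter)
  also have "\<dots> = measure_pmf.prob q {\<omega> \<in> set_pmf q. Q \<omega>}"
    using assms by (simp add: measure_measure_pmf_finite)
  also have "{\<omega> \<in> set_pmf q. Q \<omega>} = {\<omega>. Q \<omega>} \<inter> set_pmf q" by auto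
  also have "measure_pmf.prob q \<dots> = measure_pmf.prob q {\<omega>. Q \<omega>}" by (rule measure_Int_set_pmf)
  finally show ?thesis .
qed

lemma EE_ind:
  assumes "finite (set_pmf q)" "finite G"
  shows "EE (set_pmf q) (pmf q) G (\<lambda>\<omega> w. if Q \<omega> w then 1 else 0)
       = (\<Sum>w\<in>G. measure_pmf.prob q {\<omega>. Q \<omega> w}) / real (card G)"
proof -
  have "(\<Sum>\<omega>\<in>set_pmf q. pmf q \<omega> * (\<Sum>w\<in>G. if Q \<omega> w then 1 else 0))
      = (\<Sum>\<omega>\<in>set_pmf q. \<Sum>w\<in>G. pmf q \<omega> * (if Q \<omega> w then 1 else 0))"
    by (simp add: sum_distrib_left)
  also have "\<dots> = (\<Sum>w\<in>G. \<Sum>\<omega>\<in>set_pmf q. pmf q \<omega> * (if Q \<omega> w then 1 else 0))"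
    by (rule sum.swap)
  also have "\<dots> = (\<Sum>w\<in>G. measure_pmf.prob q {\<omega>. Q \<omega> w})"
    using sum_ind_prob[OF assms(1)] by simp
  finally show ?thesis unfolding EE_def by simp
qed

lemma KE:
  fixes p :: "(nat set \<Rightarrow> nat) pmf" and a :: "nat set \<Rightarrow> nat"
  assumes d0: "0 < d" and sp: "spreadable \<eta> d n p" and bx: "box_independent \<theta> S d n p"
    and av: "array_valued d n p X" and finX: "finite X"
    and FD: "F \<subseteq> dsets {1..n} d" and sF: "s \<in> F" and F'F: "F' \<subseteq> F - {s}" and aS: "a s \<in> S"
    and mn: "2 * card (\<Union>F) \<le> n" and \<eta>0: "0 \<le> \<eta>" and \<theta>0: "0 \<le> \<theta>"
  shows "\<bar>measure_pmf.prob p {f. \<forall>t\<in>insert s F'. f t = a t}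
          - measure_pmf.prob p {f. f s = a s} * measure_pmf.prob p {f. \<forall>t\<in>F'. f t = a t}\<bar>
         \<le> dlt d (2^d * \<eta> + \<theta> + real d / real (n div card (\<Union>F))) + 2 * \<eta>"
proof -
  define V where "V = \<Union>F"
  define m where "m = card V"
  define L1 where "L1 = n div m"
  have finDn: "finite (dsets {1..n} d)"
    by (rule finite_subset[of _ "Pow {1..n}"]) (auto simp: dsets_def)
  have finF: "finite F" using FD finDn finite_subset by blast
  have Vn: "V \<subseteq> {1..n}" using FD by (auto simp: V_def dsets_def)
  have sV: "s \<subseteq> V" using sF by (auto simp: V_def)
  have cs: "card s = d" using FD sF by (auto simp: dsets_def)
  have finV: "finite V" using Vn finite_subset by blast
  have dm: "d \<le> m" unfolding m_def using card_mono[OF finV sV] cs by simp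
  have m0: "0 < m" using dm d0 by simp
  have L1ge: "2 \<le> L1"
  proof -
    have "(2 * m) div m \<le> n div m" using mn by (intro div_le_mono) (simp add: m_def V_def)
    then show ?thesis using m0 by (simp add: L1_def)
  qed
  have mL: "card V * L1 \<le> n" unfolding L1_def m_def by simp
  interpret K: kectx n V s L1
    by unfold_locales (use Vn sV L1ge mL in auto)
  define rst where "rst f = (\<lambda>t. if t \<in> dsets {1..n} d then f t else 0)" for f :: "nat set \<Rightarrow> nat"
  define p' where "p' = map_pmf rst p"
  define \<Omega> where "\<Omega> = set_pmf p'"
  define P where "P = pmf p'"
  have finO: "finite \<Omega>"
  proof -
    have "\<Omega> \<subseteq> {g. \<forall>x. (x \<in> dsets {1..n} d \<longrightarrow> g x \<in> X) \<and> (x \<notin> dsets {1..n} d \<longrightarrow> g x = 0)}"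
      using av unfolding \<Omega>_def p'_def array_valued_def by (auto simp: rst_def)
    moreover have "finite {g. \<forall>x. (x \<in> dsets {1..n} d \<longrightarrow> g x \<in> X) \<and> (x \<notin> dsets {1..n} d \<longrightarrow> g x = (0::nat))}"
      by (rule finite_set_of_finite_funs[OF finDn finX])
    ultimately show ?thesis using finite_subset by blast
  qed
  define D where "D = K.DD"
  define G0 where "G0 = PiE K.KK K.WW"
  interpret G: grid \<Omega> P K.KK K.WW D
  proof
    show "finite \<Omega>" by (rule finO)
    show "\<forall>\<omega>\<in>\<Omega>. 0 \<le> P \<omega>" by (simp add: P_def)
    show "sum P \<Omega> = 1" unfolding P_def \<Omega>_def by (rule sum_pmf_eq_1[OF finO[unfolded \<Omega>_def]]) simp
    show "finite K.KK" by (rule K.finK)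
    show "\<forall>i\<in>K.KK. finite (K.WW i) \<and> K.WW i \<noteq> {}" by (rule K.finW)
    show "0 < D" by (simp add: D_def K.DDpos)
  qed
  have finG0: "finite G0" "G0 \<noteq> {}" using G.finG G.neG by (auto simp: G0_def)
  have PC: "measure_pmf.prob p' {\<omega>. \<forall>t\<in>\<G>. \<omega> (\<phi> t) = c t} = measure_pmf.prob p {f. \<forall>t\<in>\<G>. f (\<phi> t) = c t}"
    if "\<forall>t\<in>\<G>. \<phi> t \<in> dsets {1..n} d" for \<G> \<phi> c
  proof -
    have "rst -` {\<omega>. \<forall>t\<in>\<G>. \<omega> (\<phi> t) = c t} = {f. \<forall>t\<in>\<G>. f (\<phi> t) = c t}"
      using that by (auto simp: rst_def)
    then show ?thesis unfolding p'_def by simp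
  qed
  have EEi: "EE \<Omega> P G0 (\<lambda>\<omega> w. if Q \<omega> w then 1 else 0) = (\<Sum>w\<in>G0. measure_pmf.prob p' {\<omega>. Q \<omega> w}) / real (card G0)" for Q
    unfolding \<Omega>_def P_def by (rule EE_ind) (use finO finG0 in \<open>auto simp: \<Omega>_def\<close>)
  have psid: "K.psi w ` t \<in> dsets {1..n} d" if "w \<in> G0" "t \<in> F" for w t
  proof -
    have tV: "t \<subseteq> V" using that(2) by (auto simp: V_def)
    have inj: "inj_on (K.psi w) V" using K.psi_mono that(1) strict_mono_on_imp_inj_on unfolding G0_def by blast
    have "card (K.psi w ` t) = card t" using inj_on_subset[OF inj tV] by (simp add: card_image)
    then show ?thesis using K.psi_img[of w] that tV FD unfolding G0_def by (auto simp: dsets_def)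
  qed
  have spw: "\<bar>measure_pmf.prob p {f. \<forall>t\<in>\<G>. f (K.psi w ` t) = c t} - measure_pmf.prob p {f. \<forall>t\<in>\<G>. f t = c t}\<bar> \<le> \<eta>"
    if "w \<in> G0" "\<G> \<subseteq> F" for w \<G> c
  proof (rule spread[OF sp Vn])
    show "d \<le> card V" using dm m_def by simp
    show "strict_mono_on V (K.psi w)" using K.psi_mono that(1) unfolding G0_def by blast
    show "K.psi w ` V \<subseteq> {1..n}" using K.psi_img that(1) unfolding G0_def by blast
    show "\<forall>t\<in>\<G>. t \<subseteq> V \<and> card t = d" using that(2) FD by (auto simp: V_def dsets_def)
  qed
  define r where "r = measure_pmf.prob p {f. f s = a s}"
  define \<epsilon> where "\<epsilon> = 2^d * \<eta> + \<theta> + real d / real L1"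
  have r01: "0 \<le> r" "r \<le> 1" by (auto simp: r_def measure_pmf.prob_le_1)
  have L1r: "real L1 > 0" using L1ge by simp
  have e0: "0 \<le> \<epsilon>" using \<eta>0 \<theta>0 L1r by (simp add: \<epsilon>_def)
  have ege: "\<eta> \<le> \<epsilon>"
  proof -
    have "1 * \<eta> \<le> 2^d * \<eta>" using \<eta>0 by (intro mult_right_mono) auto
    moreover have "0 \<le> real d / real L1" by simp
    ultimately show ?thesis using \<theta>0 unfolding \<epsilon>_def by linarith
  qed
  have pick_ex: "\<exists>u. u \<in> s \<and> u \<notin> t" if "t \<in> F'" for t
  proof (rule ccontr)
    assume "\<not> (\<exists>u. u \<in> s \<and> u \<notin> t)"
    then have "s \<subseteq> t" by auto
    moreover have "finite t" "card t = card s" using that F'F FD cs by (auto simp: dsets_def intro: finite_subset)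
    ultimately have "s = t" by (intro card_subset_eq) auto
    then show False using that F'F by auto
  qed
  define pick where "pick t = (SOME u. u \<in> s \<and> u \<notin> t)" for t
  have pick: "pick t \<in> s" "pick t \<notin> t" if "t \<in> F'" for t
    using someI_ex[OF pick_ex[OF that]] by (auto simp: pick_def)
  define Z where "Z \<omega> w = (if \<omega> (K.psi w ` s) = a s then 1 else 0 :: real)" for \<omega> :: "nat set \<Rightarrow> nat" and w
  define b where "b u \<omega> w = (\<Prod>t\<in>{t. t \<in> F' \<and> pick t = u}. if \<omega> (K.psi w ` t) = a t then 1 else 0 :: real)"
    for u and \<omega> :: "nat set \<Rightarrow> nat" and w
  have finF': "finite F'" using F'F finF finite_subset by blast
  have fins: "finite s" by (rule K.fins)
  have sD: "\<forall>j\<in>s. j < D \<and> j \<in> K.KK \<and> j + D \<in> K.KK \<and> K.WW (j + D) = K.WW j"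
    using K.sn K.KK_s K.W_s unfolding D_def K.DD_def by (auto simp: le_imp_less_Suc)
  have jDs: "j + D \<notin> s" if "j \<in> s" for j
    using K.sn that unfolding D_def K.DD_def by fastforce
  note AL1 = G.AL[OF fins sD, rule_format, of Z b r \<epsilon>]
  have Z01: "\<forall>\<omega> w. 0 \<le> Z \<omega> w \<and> Z \<omega> w \<le> 1" by (simp add: Z_def)
  have Zi: "\<forall>j\<in>s. indep Z (j + D)"
    using K.psi_upd[OF jDs] by (simp add: indep_def Z_def)
  have b01: "\<forall>i\<in>s. \<forall>\<omega> w. 0 \<le> b i \<omega> w \<and> b i \<omega> w \<le> 1"
    by (auto simp: b_def intro: prod_nonneg prod_le_1)
  have bi: "\<forall>i\<in>s. indep (b i) i \<and> (\<forall>j\<in>s. indep (b i) (j + D))"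
  proof (intro ballI conjI)
    fix i assume i: "i \<in> s"
    show "indep (b i) i"
      unfolding indep_def b_def
    proof (intro allI prod.cong refl)
      fix \<omega> :: "nat set \<Rightarrow> nat" and w x t assume "t \<in> {t. t \<in> F' \<and> pick t = i}"
      then have "i \<notin> t" using pick by auto
      then show "(if \<omega> (K.psi (w(i := x)) ` t) = a t then 1 else 0 :: real) = (if \<omega> (K.psi w ` t) = a t then 1 else 0)"
        by (simp add: K.psi_upd2)
    qed
    fix j assume j: "j \<in> s"
    show "indep (b i) (j + D)"
      unfolding indep_def b_def using K.psi_upd[OF jDs[OF j]] by simp
  qed
  have Bprod: "(\<Prod>i\<in>s. b i \<omega> w) = (if \<forall>t\<in>F'. \<omega> (K.psi w ` t) = a t then 1 else 0)" for \<omega> w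
  proof -
    have "(\<Prod>i\<in>s. b i \<omega> w) = (\<Prod>t\<in>F'. if \<omega> (K.psi w ` t) = a t then 1 else 0 :: real)"
      unfolding b_def by (rule prod.group) (use finF' fins pick in auto)
    then show ?thesis by (simp add: prod_ind[OF finF'])
  qed
  have sF'': "s \<notin> F'" using F'F by auto
  have EZv: "EE \<Omega> P G0 Z = (\<Sum>w\<in>G0. measure_pmf.prob p {f. \<forall>t\<in>{s}. f (K.psi w ` t) = a t}) / real (card G0)"
  proof -
    have "EE \<Omega> P G0 Z = EE \<Omega> P G0 (\<lambda>\<omega> w. if \<forall>t\<in>{s}. \<omega> (K.psi w ` t) = a t then 1 else 0)"
      by (simp add: Z_def[abs_def])
    also have "\<dots> = (\<Sum>w\<in>G0. measure_pmf.prob p' {\<omega>. \<forall>t\<in>{s}. \<omega> (K.psi w ` t) = a t}) / real (card G0)"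
      by (rule EEi)
    also have "\<dots> = (\<Sum>w\<in>G0. measure_pmf.prob p {f. \<forall>t\<in>{s}. f (K.psi w ` t) = a t}) / real (card G0)"
    proof (intro arg_cong2[where f="(/)"] sum.cong refl PC ballI)
      fix w t assume "w \<in> G0" "t \<in> {s}"
      then show "K.psi w ` t \<in> dsets {1..n} d" using psid sF by auto
    qed
    finally show ?thesis .
  qed
  have EZbv: "EE \<Omega> P G0 (\<lambda>\<omega> w. Z \<omega> w * (\<Prod>i\<in>s. b i \<omega> w))
      = (\<Sum>w\<in>G0. measure_pmf.prob p {f. \<forall>t\<in>insert s F'. f (K.psi w ` t) = a t}) / real (card G0)"
  proof -
    have "EE \<Omega> P G0 (\<lambda>\<omega> w. Z \<omega> w * (\<Prod>i\<in>s. b i \<omega> w))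
        = EE \<Omega> P G0 (\<lambda>\<omega> w. if \<forall>t\<in>insert s F'. \<omega> (K.psi w ` t) = a t then 1 else 0)"
    proof -
      have pw: "Z \<omega> w * (\<Prod>i\<in>s. b i \<omega> w) = (if \<forall>t\<in>insert s F'. \<omega> (K.psi w ` t) = a t then 1 else 0)" for \<omega> w
        by (simp add: Z_def Bprod)
      show ?thesis by (simp only: pw)
    qed
    also have "\<dots> = (\<Sum>w\<in>G0. measure_pmf.prob p' {\<omega>. \<forall>t\<in>insert s F'. \<omega> (K.psi w ` t) = a t}) / real (card G0)"
      by (rule EEi)
    also have "\<dots> = (\<Sum>w\<in>G0. measure_pmf.prob p {f. \<forall>t\<in>insert s F'. f (K.psi w ` t) = a t}) / real (card G0)"
    proof (intro arg_cong2[where f="(/)"] sum.cong refl PC ballI)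
      fix w t assume "w \<in> G0" "t \<in> insert s F'"
      then show "K.psi w ` t \<in> dsets {1..n} d" using psid sF F'F by auto
    qed
    finally show ?thesis .
  qed
  have Ebv: "EE \<Omega> P G0 (\<lambda>\<omega> w. \<Prod>i\<in>s. b i \<omega> w)
      = (\<Sum>w\<in>G0. measure_pmf.prob p {f. \<forall>t\<in>F'. f (K.psi w ` t) = a t}) / real (card G0)"
  proof -
    have "EE \<Omega> P G0 (\<lambda>\<omega> w. \<Prod>i\<in>s. b i \<omega> w)
        = EE \<Omega> P G0 (\<lambda>\<omega> w. if \<forall>t\<in>F'. \<omega> (K.psi w ` t) = a t then 1 else 0)"
      by (simp add: Bprod)
    also have "\<dots> = (\<Sum>w\<in>G0. measure_pmf.prob p' {\<omega>. \<forall>t\<in>F'. \<omega> (K.psi w ` t) = a t}) / real (card G0)"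
      by (rule EEi)
    also have "\<dots> = (\<Sum>w\<in>G0. measure_pmf.prob p {f. \<forall>t\<in>F'. f (K.psi w ` t) = a t}) / real (card G0)"
    proof (intro arg_cong2[where f="(/)"] sum.cong refl PC ballI)
      fix w t assume "w \<in> G0" "t \<in> F'"
      then show "K.psi w ` t \<in> dsets {1..n} d" using psid F'F by auto
    qed
    finally show ?thesis .
  qed
  have mixd: "mix D T w ` s \<in> dsets {1..n} d" if "w \<in> G0" for w T
  proof -
    have "card (mix D T w ` s) = card s"
      using strict_mono_on_imp_inj_on[OF K.mix_mono[of w T]] that unfolding G0_def D_def by (simp add: card_image)
    then show ?thesis using K.mix_img[of w T] that cs unfolding G0_def D_def by (auto simp: dsets_def)
  qed
  have Edv: "EE \<Omega> P G0 (dbl D s Z)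
      = (\<Sum>w\<in>G0. measure_pmf.prob p {f. \<forall>T\<in>Pow s. f (mix D T w ` s) = a s}) / real (card G0)"
  proof -
    have "dbl D s Z \<omega> w = (if \<forall>T\<in>Pow s. \<omega> (mix D T w ` s) = a s then 1 else 0)" for \<omega> w
      unfolding dbl_def Z_def K.psi_s using prod_ind[of "Pow s"] fins by simp
    then have "dbl D s Z = (\<lambda>\<omega> w. if \<forall>T\<in>Pow s. \<omega> (mix D T w ` s) = a s then 1 else 0)"
      by (simp add: fun_eq_iff)
    then have "EE \<Omega> P G0 (dbl D s Z) = EE \<Omega> P G0 (\<lambda>\<omega> w. if \<forall>T\<in>Pow s. \<omega> (mix D T w ` s) = a s then 1 else 0)"
      by simp
    also have "\<dots> = (\<Sum>w\<in>G0. measure_pmf.prob p' {\<omega>. \<forall>T\<in>Pow s. \<omega> (mix D T w ` s) = a s}) / real (card G0)"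
      by (rule EEi)
    also have "\<dots> = (\<Sum>w\<in>G0. measure_pmf.prob p {f. \<forall>T\<in>Pow s. f (mix D T w ` s) = a s}) / real (card G0)"
    proof (intro arg_cong2[where f="(/)"] sum.cong refl PC ballI)
      fix w T assume "w \<in> G0" "T \<in> Pow s"
      then show "mix D T w ` s \<in> dsets {1..n} d" using mixd by auto
    qed
    finally show ?thesis .
  qed
  have EZ: "r - \<epsilon> \<le> EE \<Omega> P G0 Z"
  proof -
    have "\<bar>EE \<Omega> P G0 Z - r\<bar> \<le> \<eta>"
      unfolding EZv r_def
    proof (rule avg_close[OF finG0])
      fix w assume w: "w \<in> G0"
      show "\<bar>measure_pmf.prob p {f. \<forall>t\<in>{s}. f (K.psi w ` t) = a t} - measure_pmf.prob p {f. f s = a s}\<bar> \<le> \<eta>"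
        using spw[OF w, of "{s}" a] sF by simp
    qed
    then show ?thesis using ege by linarith
  qed
  have fW: "\<forall>i\<in>K.KK. finite (K.WW i)" using K.finW by auto
  have avg_ind: "(\<Sum>w\<in>G0. if w u = w (u + D) then 1 else 0 :: real) = real (card G0) / real L1" if u: "u \<in> s" for u
  proof -
    have neW: "K.WW u \<noteq> {}" using K.finW K.KK_s(1)[OF u] by auto
    have cW: "card (K.WW u) = L1" using K.W_s(1)[OF u] K.blk_card by simp
    have uD: "u \<noteq> u + D" using G.Dpos by simp
    have "(\<Sum>w\<in>G0. if w u = w (u + D) then 1 else 0 :: real)
        = (\<Sum>w\<in>G0. (\<Sum>x\<in>K.WW u. if (w(u:=x)) u = (w(u:=x)) (u + D) then 1 else 0) / real (card (K.WW u)))"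
      unfolding G0_def by (rule resample_avg[OF K.finK K.KK_s(1)[OF u] fW neW])
    also have "\<dots> = (\<Sum>w\<in>G0. 1 / real L1)"
    proof (intro sum.cong refl)
      fix w assume w: "w \<in> G0"
      have "w (u + D) \<in> K.WW u" using K.wblk[of w u] w u K.W_s(1)[OF u] unfolding G0_def D_def by auto
      moreover have "(\<Sum>x\<in>K.WW u. if (w(u:=x)) u = (w(u:=x)) (u + D) then 1 else 0 :: real)
          = (\<Sum>x\<in>K.WW u. if x = w (u + D) then 1 else 0)"
        using uD by (intro sum.cong refl) auto
      ultimately show "(\<Sum>x\<in>K.WW u. if (w(u:=x)) u = (w(u:=x)) (u + D) then 1 else 0) / real (card (K.WW u)) = 1 / real L1"
        using K.finW K.KK_s(1)[OF u] cW by simp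
    qed
    finally show ?thesis by simp
  qed
  have boxw: "measure_pmf.prob p {f. \<forall>T\<in>Pow s. f (mix D T w ` s) = a s}
      \<le> r ^ (2 ^ d) + 2 ^ d * \<eta> + \<theta> + (\<Sum>u\<in>s. if w u = w (u + D) then 1 else 0)" if w: "w \<in> G0" for w
  proof (cases "\<forall>u\<in>s. w u \<noteq> w (u + D)")
    case True
    define B where "B = (\<lambda>T. mix D T w ` s) ` Pow s"
    have wK: "w \<in> PiE K.KK K.WW" using w by (simp add: G0_def)
    have ndK: "\<forall>u\<in>s. w u \<noteq> w (u + K.DD)" using True by (simp add: D_def)
    have isb: "is_box d n B" using K.box_is[OF wK ndK] cs unfolding B_def D_def by simp
    have cB: "card B = 2 ^ d" using K.box_card[OF wK ndK] cs unfolding B_def D_def by simp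
    define q where "q = min 1 (r + \<eta>)"
    have q: "r \<le> q" "q \<le> 1" "q - r \<le> \<eta>" using r01 \<eta>0 by (auto simp: q_def)
    have "{f. \<forall>T\<in>Pow s. f (mix D T w ` s) = a s} = (\<Inter>t\<in>B. {f. f t = a s})"
      by (auto simp: B_def)
    then have "measure_pmf.prob p {f. \<forall>T\<in>Pow s. f (mix D T w ` s) = a s}
        = measure_pmf.prob p (\<Inter>t\<in>B. {f. f t = a s})" by simp
    also have "\<dots> \<le> (\<Prod>t\<in>B. measure_pmf.prob p {f. f t = a s}) + \<theta>"
      using bx isb aS unfolding box_independent_def by blast
    also have "(\<Prod>t\<in>B. measure_pmf.prob p {f. f t = a s}) \<le> (\<Prod>t\<in>B. q)"
    proof (rule prod_mono)
      fix t assume "t \<in> B"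
      then obtain T where T: "t = mix D T w ` s" unfolding B_def by auto
      have "\<bar>measure_pmf.prob p {f. \<forall>t'\<in>{s}. f (mix D T w ` t') = a s} - measure_pmf.prob p {f. \<forall>t'\<in>{s}. f t' = a s}\<bar> \<le> \<eta>"
      proof (rule spread[OF sp])
        show "s \<subseteq> {1..n}" using sV Vn by auto
        show "d \<le> card s" using cs by simp
        show "strict_mono_on s (mix D T w)" using K.mix_mono[OF wK] by (simp add: D_def)
        show "mix D T w ` s \<subseteq> {1..n}" using K.mix_img[OF wK] by (simp add: D_def)
        show "\<forall>t\<in>{s}. t \<subseteq> s \<and> card t = d" using cs by simp
      qed
      then have "measure_pmf.prob p {f. f t = a s} \<le> r + \<eta>" unfolding T r_def by simp
      then show "0 \<le> measure_pmf.prob p {f. f t = a s} \<and> measure_pmf.prob p {f. f t = a s} \<le> q"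
        by (auto simp: q_def measure_pmf.prob_le_1)
    qed
    also have "(\<Prod>t\<in>B. q) = q ^ (2 ^ d)" using cB by simp
    also have "q ^ (2 ^ d) \<le> r ^ (2 ^ d) + 2 ^ d * \<eta>"
    proof -
      have "q ^ (2 ^ d) - r ^ (2 ^ d) \<le> real (2 ^ d) * (q - r)" by (rule powdiff) (use r01 q in auto)
      also have "\<dots> \<le> 2 ^ d * \<eta>" using mult_left_mono[OF q(3), of "real (2 ^ d)"] by simp
      finally show ?thesis by simp
    qed
    finally have "measure_pmf.prob p {f. \<forall>T\<in>Pow s. f (mix D T w ` s) = a s} \<le> r ^ (2 ^ d) + 2 ^ d * \<eta> + \<theta>"
      by simp
    moreover have "0 \<le> (\<Sum>u\<in>s. if w u = w (u + D) then 1 else 0 :: real)" by (intro sum_nonneg) auto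
    ultimately show ?thesis by linarith
  next
    case False
    then obtain u where u: "u \<in> s" "w u = w (u + D)" by auto
    have "(1::real) \<le> (\<Sum>u\<in>s. if w u = w (u + D) then 1 else 0)"
      using member_le_sum[of u s "\<lambda>u. if w u = w (u + D) then 1 else 0 :: real"] u fins by auto
    moreover have "measure_pmf.prob p {f. \<forall>T\<in>Pow s. f (mix D T w ` s) = a s} \<le> 1" by (simp add: measure_pmf.prob_le_1)
    moreover have "0 \<le> r ^ (2 ^ d)" using r01 by simp
    moreover have "0 \<le> 2 ^ d * \<eta>" using \<eta>0 by simp
    ultimately show ?thesis using \<theta>0 by linarith
  qed
  have Edbl: "EE \<Omega> P G0 (dbl D s Z) \<le> r ^ (2 ^ card s) + \<epsilon>"
  proof -
    define c where "c = r ^ (2 ^ d) + 2 ^ d * \<eta> + \<theta>"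
    have cG: "real (card G0) > 0" using finG0 by (simp add: card_gt_0_iff)
    have "EE \<Omega> P G0 (dbl D s Z) \<le> (\<Sum>w\<in>G0. c + (\<Sum>u\<in>s. if w u = w (u + D) then 1 else 0)) / real (card G0)"
      unfolding Edv c_def using boxw cG by (intro divide_right_mono sum_mono) auto
    also have "\<dots> = (real (card G0) * c + (\<Sum>u\<in>s. \<Sum>w\<in>G0. if w u = w (u + D) then 1 else 0)) / real (card G0)"
      by (simp add: sum.distrib sum.swap[of _ G0 s])
    also have "(\<Sum>u\<in>s. \<Sum>w\<in>G0. if w u = w (u + D) then 1 else 0 :: real) = (\<Sum>u\<in>s. real (card G0) / real L1)"
      using avg_ind by simp
    also have "(real (card G0) * c + (\<Sum>u\<in>s. real (card G0) / real L1)) / real (card G0) = c + real d / real L1"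
      using cG cs by (simp add: field_simps)
    finally show ?thesis unfolding c_def \<epsilon>_def cs by simp
  qed
  have ALr: "\<bar>EE \<Omega> P G0 (\<lambda>\<omega> w. (Z \<omega> w - r) * (\<Prod>i\<in>s. b i \<omega> w))\<bar> \<le> dlt (card s) \<epsilon>"
    unfolding G0_def by (rule AL1) (use Z01 Zi b01 bi r01 e0 EZ Edbl in \<open>auto simp: G0_def\<close>)
  have lin: "EE \<Omega> P G0 (\<lambda>\<omega> w. (Z \<omega> w - r) * (\<Prod>i\<in>s. b i \<omega> w))
      = EE \<Omega> P G0 (\<lambda>\<omega> w. Z \<omega> w * (\<Prod>i\<in>s. b i \<omega> w)) - r * EE \<Omega> P G0 (\<lambda>\<omega> w. \<Prod>i\<in>s. b i \<omega> w)"
  proof -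
    have "(\<lambda>\<omega> w. (Z \<omega> w - r) * (\<Prod>i\<in>s. b i \<omega> w)) = (\<lambda>\<omega> w. Z \<omega> w * (\<Prod>i\<in>s. b i \<omega> w) - r * (\<Prod>i\<in>s. b i \<omega> w))"
      by (simp add: fun_eq_iff algebra_simps)
    then show ?thesis unfolding G0_def using G.EE_diff G.EE_cmult by simp
  qed
  define PI where "PI = measure_pmf.prob p {f. \<forall>t\<in>insert s F'. f t = a t}"
  define PG where "PG = measure_pmf.prob p {f. \<forall>t\<in>F'. f t = a t}"
  have c1: "\<bar>EE \<Omega> P G0 (\<lambda>\<omega> w. Z \<omega> w * (\<Prod>i\<in>s. b i \<omega> w)) - PI\<bar> \<le> \<eta>"
    unfolding EZbv PI_def
    by (rule avg_close[OF finG0]) (rule spw, use sF F'F in auto)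
  have c2: "\<bar>EE \<Omega> P G0 (\<lambda>\<omega> w. \<Prod>i\<in>s. b i \<omega> w) - PG\<bar> \<le> \<eta>"
    unfolding Ebv PG_def
    by (rule avg_close[OF finG0]) (rule spw, use F'F in auto)
  have c3: "\<bar>r * (EE \<Omega> P G0 (\<lambda>\<omega> w. \<Prod>i\<in>s. b i \<omega> w) - PG)\<bar> \<le> 1 * \<eta>"
    unfolding abs_mult using r01 c2 by (intro mult_mono) auto
  have "\<bar>PI - r * PG\<bar> \<le> dlt (card s) \<epsilon> + 2 * \<eta>"
    using ALr c1 c3 unfolding lin by (simp add: abs_le_iff algebra_simps)
  then show ?thesis unfolding PI_def PG_def r_def cs \<epsilon>_def L1_def m_def V_def .
qed



definition gam :: "real \<Rightarrow> real \<Rightarrow> nat \<Rightarrow> nat \<Rightarrow> nat \<Rightarrow> real" where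
  "gam \<eta> \<theta> d n k = min 1 (real k * (dlt d (2^d * \<eta> + \<theta> + real d / real (max 2 (n div (d * k)))) + 2 * \<eta>))"

lemma gam_pos: "0 < \<eta> \<Longrightarrow> 0 \<le> \<theta> \<Longrightarrow> 1 \<le> k \<Longrightarrow> 0 < gam \<eta> \<theta> d n k"
proof -
  assume a: "0 < \<eta>" "0 \<le> \<theta>" "1 \<le> k"
  have "0 \<le> dlt d (2^d * \<eta> + \<theta> + real d / real (max 2 (n div (d * k))))"
    using a by (intro dlt_nonneg) auto
  then have "0 < real k * (dlt d (2^d * \<eta> + \<theta> + real d / real (max 2 (n div (d * k)))) + 2 * \<eta>)"
    using a by (intro mult_pos_pos) auto
  then show ?thesis by (simp add: gam_def)
qed

lemma gam_small:
  assumes "0 < d" "1 \<le> k" "0 < \<epsilon>"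
  shows "\<exists>N \<delta>. 0 < \<delta> \<and> (\<forall>n \<eta> \<theta>. N \<le> n \<longrightarrow> 0 < \<eta> \<longrightarrow> \<eta> \<le> \<delta> \<longrightarrow> 0 < \<theta> \<longrightarrow> \<theta> \<le> \<delta> \<longrightarrow> gam \<eta> \<theta> d n k < \<epsilon>)"
proof -
  have kpos: "0 < real k" using assms by simp
  obtain \<rho> where \<rho>: "\<rho> > 0" "\<forall>x. 0 \<le> x \<longrightarrow> x \<le> \<rho> \<longrightarrow> dlt d x < \<epsilon> / (2 * real k)"
    using dlt_small[of "\<epsilon> / (2 * real k)" d] assms kpos by auto
  define \<delta> where "\<delta> = min (\<rho> / (3 * 2^d)) (\<epsilon> / (8 * real k))"
  define M where "M = nat (ceiling (3 * real d / \<rho>)) + 2"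
  define N where "N = d * k * M"
  have \<delta>0: "0 < \<delta>" using \<rho> assms kpos by (simp add: \<delta>_def)
  have M: "3 * real d / \<rho> \<le> real M" "2 \<le> M" unfolding M_def by linarith+
  show ?thesis
  proof (intro exI[of _ N] exI[of _ \<delta>] conjI \<delta>0 allI impI)
    fix n \<eta> \<theta> assume n: "N \<le> n" and e: "0 < \<eta>" "\<eta> \<le> \<delta>" and t: "0 < \<theta>" "\<theta> \<le> \<delta>"
    have dk: "0 < d * k" using assms by simp
    have "M = N div (d * k)" unfolding N_def using dk by simp
    also have "\<dots> \<le> n div (d * k)" using n by (rule div_le_mono)
    finally have Mn: "M \<le> max 2 (n div (d * k))" by simp
    have Mpos: "0 < real M" using M by simp
    have "real d / real (max 2 (n div (d * k))) \<le> real d / real M"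
      using Mn Mpos by (intro divide_left_mono) auto
    also have "\<dots> \<le> \<rho> / 3"
    proof -
      have "3 * real d \<le> real M * \<rho>" using M(1) \<rho>(1) by (simp add: divide_le_eq)
      then show ?thesis using Mpos by (simp add: divide_le_eq field_simps)
    qed
    finally have t3: "real d / real (max 2 (n div (d * k))) \<le> \<rho> / 3" .
    have t1: "2^d * \<eta> \<le> \<rho> / 3"
    proof -
      have "\<eta> \<le> \<rho> / (3 * 2^d)" using e by (simp add: \<delta>_def)
      then show ?thesis by (simp add: field_simps)
    qed
    have t2: "\<theta> \<le> \<rho> / 3"
    proof -
      have "\<theta> \<le> \<rho> / (3 * 2^d)" using t by (simp add: \<delta>_def)
      also have "\<dots> \<le> \<rho> / 3" using \<rho> by (simp add: field_simps)
      finally show ?thesis .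
    qed
    define x where "x = 2^d * \<eta> + \<theta> + real d / real (max 2 (n div (d * k)))"
    have x0: "0 \<le> x" using e t by (simp add: x_def)
    have "x \<le> \<rho>" unfolding x_def using t1 t2 t3 by linarith
    then have dx: "dlt d x < \<epsilon> / (2 * real k)" using \<rho> x0 by auto
    have e8: "\<eta> \<le> \<epsilon> / (8 * real k)" using e by (simp add: \<delta>_def)
    have "real k * (dlt d x + 2 * \<eta>) = real k * dlt d x + 2 * (real k * \<eta>)" by (simp add: algebra_simps)
    also have "\<dots> < \<epsilon> / 2 + 2 * (\<epsilon> / 8)"
    proof -
      have a1: "real k * dlt d x < real k * (\<epsilon> / (2 * real k))" by (rule mult_strict_left_mono[OF dx kpos])
      have a2: "real k * (\<epsilon> / (2 * real k)) = \<epsilon> / 2" using kpos by simp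
      have b1: "real k * \<eta> \<le> real k * (\<epsilon> / (8 * real k))" by (rule mult_left_mono[OF e8]) (use kpos in simp)
      have b2: "real k * (\<epsilon> / (8 * real k)) = \<epsilon> / 8" using kpos by simp
      show ?thesis using a1 a2 b1 b2 by linarith
    qed
    also have "\<dots> < \<epsilon>" using assms by simp
    finally show "gam \<eta> \<theta> d n k < \<epsilon>" unfolding gam_def x_def[symmetric] by simp
  qed
qed

lemma main_ind:
  fixes p :: "(nat set \<Rightarrow> nat) pmf"
  assumes d0: "0 < d" and e0: "0 < \<eta>" and t0: "0 < \<theta>" and finX: "finite X"
    and av: "array_valued d n p X" and sp: "spreadable \<eta> d n p" and bx: "box_independent \<theta> S d n p"
  shows "gamma_independent (gam \<eta> \<theta> d n) S d n p"
  unfolding gamma_independent_def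
proof (intro allI impI)
  fix F :: "nat set set" and a :: "nat set \<Rightarrow> nat"
  assume Fne: "F \<noteq> {}" and FD: "F \<subseteq> dsets {1..n} d" and cu: "real (card (\<Union>F)) \<le> real n / 2"
    and aS: "\<forall>s\<in>F. a s \<in> S"
  define m where "m = card (\<Union>F)"
  define k where "k = card F"
  have finDn: "finite (dsets {1..n} d)"
    by (rule finite_subset[of _ "Pow {1..n}"]) (auto simp: dsets_def)
  have finF: "finite F" using FD finDn finite_subset by blast
  have k1: "1 \<le> k" using Fne finF by (simp add: k_def Suc_le_eq card_gt_0_iff)
  have mn: "2 * m \<le> n" using cu unfolding m_def by linarith
  define \<kappa> where "\<kappa> = dlt d (2^d * \<eta> + \<theta> + real d / real (n div m)) + 2 * \<eta>"
  define Aev where "Aev t = {f :: nat set \<Rightarrow> nat. f t = a t}" for t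
  have tel: "\<bar>measure_pmf.prob p (\<Inter>t\<in>F. Aev t) - (\<Prod>t\<in>F. measure_pmf.prob p (Aev t))\<bar> \<le> real (card F) * \<kappa>"
  proof (rule telescope[OF finF])
    fix s F' assume sF: "s \<in> F" and F'F: "F' \<subseteq> F - {s}"
    have e1: "Aev s \<inter> (\<Inter>t\<in>F'. Aev t) = {f. \<forall>t\<in>insert s F'. f t = a t}" by (auto simp: Aev_def)
    have e2: "(\<Inter>t\<in>F'. Aev t) = {f. \<forall>t\<in>F'. f t = a t}" by (auto simp: Aev_def)
    show "\<bar>measure_pmf.prob p (Aev s \<inter> (\<Inter>t\<in>F'. Aev t)) - measure_pmf.prob p (Aev s) * measure_pmf.prob p (\<Inter>t\<in>F'. Aev t)\<bar> \<le> \<kappa>"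
      unfolding e1 unfolding e2 unfolding Aev_def \<kappa>_def m_def
      by (rule KE[OF d0 sp bx av finX FD sF F'F]) (use aS sF mn e0 t0 m_def in auto)
  qed
  obtain t0' where t0': "t0' \<in> F" using Fne by auto
  have finU: "finite (\<Union>F)" using FD finF by (auto simp: dsets_def intro: finite_subset)
  have m0: "0 < m"
  proof -
    have "t0' \<subseteq> \<Union>F" using t0' by auto
    moreover have "card t0' = d" using t0' FD by (auto simp: dsets_def)
    ultimately have "d \<le> m" unfolding m_def using card_mono[OF finU] by metis
    then show ?thesis using d0 by simp
  qed
  have mdk: "m \<le> d * k"
  proof -
    have "m \<le> sum card F" unfolding m_def by (rule card_Union_le_sum_card)
    also have "sum card F = (\<Sum>t\<in>F. d)" using FD by (intro sum.cong) (auto simp: dsets_def)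
    finally show ?thesis by (simp add: k_def mult.commute)
  qed
  have "n div (d * k) \<le> n div m" by (rule div_le_mono2[OF m0 mdk])
  moreover have "2 \<le> n div m"
  proof -
    have "(2 * m) div m \<le> n div m" using mn by (rule div_le_mono)
    then show ?thesis using m0 by simp
  qed
  ultimately have mx: "max 2 (n div (d * k)) \<le> n div m" by simp
  have "real d / real (n div m) \<le> real d / real (max 2 (n div (d * k)))"
    using mx by (intro divide_left_mono) auto
  then have "dlt d (2^d * \<eta> + \<theta> + real d / real (n div m)) \<le> dlt d (2^d * \<eta> + \<theta> + real d / real (max 2 (n div (d * k))))"
    using e0 t0 by (intro dlt_mono) auto
  then have "real (card F) * \<kappa> \<le> real k * (dlt d (2^d * \<eta> + \<theta> + real d / real (max 2 (n div (d * k)))) + 2 * \<eta>)"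
    unfolding \<kappa>_def k_def by (intro mult_left_mono) auto
  moreover have "\<bar>measure_pmf.prob p (\<Inter>t\<in>F. Aev t) - (\<Prod>t\<in>F. measure_pmf.prob p (Aev t))\<bar> \<le> 1"
  proof -
    have "0 \<le> measure_pmf.prob p (\<Inter>t\<in>F. Aev t)" "measure_pmf.prob p (\<Inter>t\<in>F. Aev t) \<le> 1"
      by (auto simp: measure_pmf.prob_le_1)
    moreover have "0 \<le> (\<Prod>t\<in>F. measure_pmf.prob p (Aev t))" "(\<Prod>t\<in>F. measure_pmf.prob p (Aev t)) \<le> 1"
      by (auto intro: prod_nonneg prod_le_1 simp: measure_pmf.prob_le_1)
    ultimately show ?thesis by linarith
  qed
  ultimately have "\<bar>measure_pmf.prob p (\<Inter>t\<in>F. Aev t) - (\<Prod>t\<in>F. measure_pmf.prob p (Aev t))\<bar> \<le> gam \<eta> \<theta> d n k"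
    using tel unfolding gam_def by linarith
  then show "\<bar>measure_pmf.prob p (\<Inter>s\<in>F. {f. f s = a s}) - (\<Prod>s\<in>F. measure_pmf.prob p {f. f s = a s})\<bar> \<le> gam \<eta> \<theta> d n (card F)"
    unfolding Aev_def k_def .
qed

theorem theorem3p2:
  "\<exists>\<gamma> :: real \<Rightarrow> real \<Rightarrow> nat \<Rightarrow> nat \<Rightarrow> nat \<Rightarrow> real.
     (\<forall>\<eta> \<theta> d n k. 0 < d \<longrightarrow> 4 * d \<le> n \<longrightarrow> 0 < \<eta> \<longrightarrow> \<eta> \<le> 1 \<longrightarrow> 0 < \<theta> \<longrightarrow> \<theta> \<le> 1 \<longrightarrow>
        1 \<le> k \<longrightarrow> k \<le> (n div 2) choose d \<longrightarrow> 0 < \<gamma> \<eta> \<theta> d n k)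
   \<and> (\<forall>d k. 0 < d \<longrightarrow> 1 \<le> k \<longrightarrow> (\<forall>\<epsilon>>0. \<exists>N \<delta>. 0 < \<delta> \<and>
        (\<forall>n \<eta> \<theta>. N \<le> n \<longrightarrow> 0 < \<eta> \<longrightarrow> \<eta> \<le> \<delta> \<longrightarrow> \<eta> \<le> 1 \<longrightarrow> 0 < \<theta> \<longrightarrow> \<theta> \<le> \<delta> \<longrightarrow> \<theta> \<le> 1 \<longrightarrow>
           4 * d \<le> n \<longrightarrow> k \<le> (n div 2) choose d \<longrightarrow> \<gamma> \<eta> \<theta> d n k < \<epsilon>)))
   \<and> (\<forall>d n \<eta> \<theta> (\<X> :: nat set) S (p :: (nat set \<Rightarrow> nat) pmf).
        0 < d \<longrightarrow> 4 * d \<le> n \<longrightarrow> 0 < \<eta> \<longrightarrow> \<eta> \<le> 1 \<longrightarrow> 0 < \<theta> \<longrightarrow> \<theta> \<le> 1 \<longrightarrow>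
        finite \<X> \<longrightarrow> S \<noteq> {} \<longrightarrow> S \<subseteq> \<X> \<longrightarrow>
        array_valued d n p \<X> \<longrightarrow> spreadable \<eta> d n p \<longrightarrow>
        box_independent \<theta> S d n p \<longrightarrow>
        gamma_independent (\<gamma> \<eta> \<theta> d n) S d n p)"
proof (intro exI[of _ gam] conjI allI impI)
  fix \<eta> \<theta> :: real and d n k :: nat
  assume "0 < \<eta>" "0 < \<theta>" "1 \<le> k"
  then show "0 < gam \<eta> \<theta> d n k" by (intro gam_pos) auto
next
  fix d k :: nat and \<epsilon> :: real
  assume "0 < d" "1 \<le> k" "0 < \<epsilon>"
  then obtain N \<delta> where "0 < \<delta>" "\<forall>n \<eta> \<theta>. N \<le> n \<longrightarrow> 0 < \<eta> \<longrightarrow> \<eta> \<le> \<delta> \<longrightarrow> 0 < \<theta> \<longrightarrow> \<theta> \<le> \<delta> \<longrightarrow> gam \<eta> \<theta> d n k < \<epsilon>"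
    using gam_small by blast
  then show "\<exists>N \<delta>. 0 < \<delta> \<and> (\<forall>n \<eta> \<theta>. N \<le> n \<longrightarrow> 0 < \<eta> \<longrightarrow> \<eta> \<le> \<delta> \<longrightarrow> \<eta> \<le> 1 \<longrightarrow> 0 < \<theta> \<longrightarrow> \<theta> \<le> \<delta> \<longrightarrow> \<theta> \<le> 1 \<longrightarrow>
           4 * d \<le> n \<longrightarrow> k \<le> (n div 2) choose d \<longrightarrow> gam \<eta> \<theta> d n k < \<epsilon>)"
    by blast
next
  fix d n :: nat and \<eta> \<theta> :: real and X :: "nat set" and S and p :: "(nat set \<Rightarrow> nat) pmf"
  assume "0 < d" "0 < \<eta>" "0 < \<theta>" "finite X" "array_valued d n p X" "spreadable \<eta> d n p" "box_independent \<theta> S d n p"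
  then show "gamma_independent (gam \<eta> \<theta> d n) S d n p" by (intro main_ind) auto
qed

end
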